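(* Let $r=0.8$, $c=1/(8^r-6^r)$ and let $n\geq 4$ be an integer. Assume that the following statement ( * ) holds for every graph of order less than $n$: ( * ) for every 2-connected cubic graph $H$, every $w_H:V(H)\to\mathbb{Z}^+$ and every $e',f'\in E(H)$ such that every 2-edge cut of $H$ separates $e'$ from $f'$, there is a cycle $D$ in $H$ with $e',f'\in E(D)$ and $w_H(D)\ge w_H(H)^r$ if $e',f'$ are adjacent, and $w_H(D)\ge c\,w_H(H)^r$ if $e',f'$ are not adjacent. Let $G$ be a 2-connected cubic graph of order $n$, $w:V(G)\to\mathbb{Z}^+$, and $e,f\in E(G)$ such that every 2-edge cut in $G$ separates $e$ from $f$. Let $X_1,\ldots,X_s\subseteq V(G)\setminus(V(e)\cup V(f))$ be pairwise disjoint sets with $|X_i|\geq 2$ such that $G'=G/(X_1,\ldots,X_s)$ is cubic. For $i=1,\ldots,s$ let $v_i$ denote the vertex obtained by contracting $X_i$; assign weight $0$ to each $v_i$, and let all other vertices of $G'$ keep their weights from $G$. Let $e_1,\ldots,e_t\in E(G')$. If $G'\ominus e_1\ominus\cdots\ominus e_t$ has a cycle $C'$ and $I\subseteq\{1,\ldots,s\}$ is such that $\partial_G(X_i)\cap E(C')\neq\emptyset$ for all $i\in I$, then $G$ has a cycle $C$ such that $E(C')\subseteq E(C)$ and $w(C)\geq w(C')+\sum_{i\in I} w(X_i)^r$.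
   Context: $\mathbb{Z}^+$ is the set of non-negative integers; for a subgraph or vertex set $H$, $w(H)=\sum_{v\in V(H)}w(v)$. $V(e)$ is the set of ends of $e$. An edge cut $F$ separates $e$ from $f$ if $e,f$ lie in different components of $G-F$. $\partial_G(X)$ is the set of edges with exactly one end in $X$. $G/(X_1,\ldots,X_s)$ is obtained by contracting each (connected) $G[X_i]$ to a single vertex, keeping multiple edges and deleting loops; its edges are identified with the corresponding edges of $G$. For a cubic graph $H$ and an edge $ab$, $H\ominus ab$ is obtained by deleting $ab$ and suppressing the degree-2 vertices $a$ and $b$ (merging the two remaining edges at each of them); a merged edge is identified with the edges it came from, so edges of $G'\ominus e_1\ominus\cdots\ominus e_t$ correspond to sets of edges of $G$, and $E(C')$ is regarded as a set of edges of $G$. *)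

theory Defs
  imports Complex_Main
begin

text \<open>Finite multigraphs (parallel edges and loops allowed).  Edges are abstract
  labels of type 'l; ends l is the set of ends (one element for a loop).\<close>

record ('v, 'l) mgraph =
  verts :: "'v set"
  edges :: "'l set"
  ends  :: "'l \<Rightarrow> 'v set"

definition wf_mgraph :: "('v, 'l) mgraph \<Rightarrow> bool" where
  "wf_mgraph H \<longleftrightarrow> finite (verts H) \<and> finite (edges H) \<and>
     (\<forall>l\<in>edges H. ends H l \<subseteq> verts H \<and> (card (ends H l) = 1 \<or> card (ends H l) = 2))"

definition deg :: "('v, 'l) mgraph \<Rightarrow> 'v \<Rightarrow> nat" where
  "deg H v = card {l\<in>edges H. v \<in> ends H l \<and> card (ends H l) = 2}
            + 2 * card {l\<in>edges H. ends H l = {v}}"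

definition cubic :: "('v, 'l) mgraph \<Rightarrow> bool" where
  "cubic H \<longleftrightarrow> wf_mgraph H \<and> (\<forall>v\<in>verts H. deg H v = 3)"

definition adj :: "('v, 'l) mgraph \<Rightarrow> 'v \<Rightarrow> 'v \<Rightarrow> bool" where
  "adj H u v \<longleftrightarrow> (\<exists>l\<in>edges H. u \<in> ends H l \<and> v \<in> ends H l)"

definition connected :: "('v, 'l) mgraph \<Rightarrow> bool" where
  "connected H \<longleftrightarrow> verts H \<noteq> {} \<and> (\<forall>u\<in>verts H. \<forall>v\<in>verts H. (adj H)\<^sup>*\<^sup>* u v)"

definition del_vert :: "('v, 'l) mgraph \<Rightarrow> 'v \<Rightarrow> ('v, 'l) mgraph" where
  "del_vert H v = H\<lparr>verts := verts H - {v}, edges := {l\<in>edges H. v \<notin> ends H l}\<rparr>"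

definition del_edges :: "('v, 'l) mgraph \<Rightarrow> 'l set \<Rightarrow> ('v, 'l) mgraph" where
  "del_edges H F = H\<lparr>edges := edges H - F\<rparr>"

definition induced :: "('v, 'l) mgraph \<Rightarrow> 'v set \<Rightarrow> ('v, 'l) mgraph" where
  "induced H X = H\<lparr>verts := X, edges := {l\<in>edges H. ends H l \<subseteq> X}\<rparr>"

definition two_connected :: "('v, 'l) mgraph \<Rightarrow> bool" where
  "two_connected H \<longleftrightarrow> wf_mgraph H \<and> card (verts H) > 2 \<and> connected H \<and>
     (\<forall>v\<in>verts H. connected (del_vert H v))"

definition two_edge_cut :: "('v, 'l) mgraph \<Rightarrow> 'l set \<Rightarrow> bool" where
  "two_edge_cut H F \<longleftrightarrow> F \<subseteq> edges H \<and> card F = 2 \<and> \<not> connected (del_edges H F)"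

definition separates :: "('v, 'l) mgraph \<Rightarrow> 'l set \<Rightarrow> 'l \<Rightarrow> 'l \<Rightarrow> bool" where
  "separates H F e f \<longleftrightarrow> e \<in> edges H - F \<and> f \<in> edges H - F \<and>
     \<not> (\<exists>u\<in>ends H e. \<exists>v\<in>ends H f. (adj (del_edges H F))\<^sup>*\<^sup>* u v)"

definition edges_adjacent :: "('v, 'l) mgraph \<Rightarrow> 'l \<Rightarrow> 'l \<Rightarrow> bool" where
  "edges_adjacent H e f \<longleftrightarrow> e \<noteq> f \<and> ends H e \<inter> ends H f \<noteq> {}"

text \<open>A cycle of H, given by its vertex set CV and edge set CE: a connected
  nonempty 2-regular subgraph (loops and 2-cycles of parallel edges allowed).\<close>
definition is_cycle :: "('v, 'l) mgraph \<Rightarrow> 'v set \<Rightarrow> 'l set \<Rightarrow> bool" where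
  "is_cycle H CV CE \<longleftrightarrow> CV \<noteq> {} \<and> CV \<subseteq> verts H \<and> CE \<subseteq> edges H \<and>
     (\<forall>l\<in>CE. ends H l \<subseteq> CV) \<and>
     (\<forall>v\<in>CV. deg \<lparr>verts = CV, edges = CE, ends = ends H\<rparr> v = 2) \<and>
     connected \<lparr>verts = CV, edges = CE, ends = ends H\<rparr>"

definition boundary :: "('v, 'l) mgraph \<Rightarrow> 'v set \<Rightarrow> 'l set" where
  "boundary H X = {l\<in>edges H. card (ends H l \<inter> X) = 1}"

definition r_exp :: real where "r_exp = 0.8"

definition c_const :: real where "c_const = 1 / (8 powr r_exp - 6 powr r_exp)"

text \<open>Statement (*) for all 2-connected cubic graphs of order less than n
  (graphs are taken with vertex and edge labels in nat; every finite graph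
  is isomorphic to such a graph).\<close>
definition star_property :: "nat \<Rightarrow> bool" where
  "star_property n \<longleftrightarrow>
    (\<forall>(H :: (nat, nat) mgraph) (wH :: nat \<Rightarrow> nat) e' f'.
       card (verts H) < n \<and> two_connected H \<and> cubic H \<and>
       e' \<in> edges H \<and> f' \<in> edges H \<and>
       (\<forall>F. two_edge_cut H F \<longrightarrow> separates H F e' f') \<longrightarrow>
       (\<exists>DV DE. is_cycle H DV DE \<and> e' \<in> DE \<and> f' \<in> DE \<and>
          (if edges_adjacent H e' f'
           then real (sum wH DV) \<ge> real (sum wH (verts H)) powr r_exp
           else real (sum wH DV) \<ge> c_const * real (sum wH (verts H)) powr r_exp)))"

text \<open>Contraction G/(X_1,...,X_s): the vertex obtained from X_i is the set X_i
  itself, every other vertex v becomes {v}.  Edges of G/(X) are labelled by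
  singletons {l} of edges of G (so that later merged edges are sets of edges
  of G); loops are deleted, multiple edges kept.\<close>
definition cls :: "nat \<Rightarrow> (nat \<Rightarrow> 'v set) \<Rightarrow> 'v \<Rightarrow> 'v set" where
  "cls s X v = (if \<exists>i\<in>{1..s}. v \<in> X i then X (SOME i. i \<in> {1..s} \<and> v \<in> X i) else {v})"

definition contract :: "('v, 'e) mgraph \<Rightarrow> (nat \<Rightarrow> 'v set) \<Rightarrow> nat \<Rightarrow> ('v set, 'e set) mgraph" where
  "contract G X s = \<lparr>verts = cls s X ` verts G,
      edges = {{l} | l. l \<in> edges G \<and> card (cls s X ` ends G l) = 2},
      ends = (\<lambda>L. cls s X ` ends G (the_elem L))\<rparr>"

definition cweight :: "('v \<Rightarrow> nat) \<Rightarrow> (nat \<Rightarrow> 'v set) \<Rightarrow> nat \<Rightarrow> 'v set \<Rightarrow> nat" where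
  "cweight w X s x = (if x \<in> X ` {1..s} then 0 else w (the_elem x))"

definition suppress :: "('v, 'e set) mgraph \<Rightarrow> 'v \<Rightarrow> ('v, 'e set) mgraph" where
  "suppress H x =
    (if x \<in> verts H \<and> (\<exists>L1 L2. L1 \<noteq> L2 \<and> {l\<in>edges H. x \<in> ends H l} = {L1, L2}
          \<and> card (ends H L1) = 2 \<and> card (ends H L2) = 2)
     then (let (L1, L2) = (SOME (L1, L2). L1 \<noteq> L2 \<and> {l\<in>edges H. x \<in> ends H l} = {L1, L2})
           in \<lparr>verts = verts H - {x},
               edges = (edges H - {L1, L2}) \<union> {L1 \<union> L2},
               ends = (ends H)(L1 \<union> L2 := (ends H L1 \<union> ends H L2) - {x})\<rparr>)
     else H)"

definition ominus :: "('v, 'e set) mgraph \<Rightarrow> 'e set \<Rightarrow> ('v, 'e set) mgraph" where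
  "ominus H M =
    (let a = (SOME a. a \<in> ends H M);
         b = (SOME b. b \<in> ends H M \<and> b \<noteq> a);
         H1 = del_edges H {M}
     in suppress (suppress H1 a) b)"

text \<open>Deleting (the current edge containing) the original edge e; no-op if
  no current edge contains e.\<close>
definition ominus_at :: "('v, 'e set) mgraph \<Rightarrow> 'e \<Rightarrow> ('v, 'e set) mgraph" where
  "ominus_at H e = (if \<exists>M\<in>edges H. e \<in> M then ominus H (THE M. M \<in> edges H \<and> e \<in> M) else H)"

definition ominus_seq :: "('v, 'e set) mgraph \<Rightarrow> 'e list \<Rightarrow> ('v, 'e set) mgraph" where
  "ominus_seq H es = foldl ominus_at H es"

end

theory Submission
  imports Defs
begin


lemma mgraph_eta: "(H::('a,'b) mgraph) = \<lparr>verts = verts H, edges = edges H, ends = ends H\<rparr>"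
  by simp

lemma del_edges_eq: "del_edges H F = \<lparr>verts = verts H, edges = edges H - F, ends = ends H\<rparr>"
  unfolding del_edges_def by simp

lemma del_vert_eq: "del_vert H v = \<lparr>verts = verts H - {v}, edges = {l\<in>edges H. v \<notin> ends H l}, ends = ends H\<rparr>"
  unfolding del_vert_def by simp

lemma adj_mono:
  assumes "adj H u v" "edges H \<subseteq> edges H'" "ends H = ends H'"
  shows "adj H' u v"
  using assms unfolding adj_def by (metis subsetD)

lemma reach_mono:
  assumes "(adj H)\<^sup>*\<^sup>* u v" "edges H \<subseteq> edges H'" "ends H = ends H'"
  shows "(adj H')\<^sup>*\<^sup>* u v"
  using assms(1)
proof (induction rule: rtranclp_induct)
  case base then show ?case by simp
next
  case (step y z)
  then show ?case using adj_mono[OF step(2) assms(2,3)]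
    by (meson rtranclp.rtrancl_into_rtrancl)
qed

lemma adj_sym: "adj H u v \<Longrightarrow> adj H v u"
  unfolding adj_def by blast

lemma reach_sym:
  assumes "(adj H)\<^sup>*\<^sup>* u v" shows "(adj H)\<^sup>*\<^sup>* v u"
  using assms
proof (induction rule: rtranclp_induct)
  case base then show ?case by simp
next
  case (step y z)
  then show ?case using adj_sym[OF step(2)]
    by (meson converse_rtranclp_into_rtranclp)
qed

lemma reach_trans:
  "(adj H)\<^sup>*\<^sup>* u v \<Longrightarrow> (adj H)\<^sup>*\<^sup>* v w \<Longrightarrow> (adj H)\<^sup>*\<^sup>* u w"
  by (rule rtranclp_trans)

lemma connected_hub:
  assumes "h \<in> verts H" "\<forall>u\<in>verts H. (adj H)\<^sup>*\<^sup>* u h"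
  shows "connected H"
  unfolding connected_def
proof (intro conjI ballI)
  show "verts H \<noteq> {}" using assms(1) by blast
next
  fix u v assume "u \<in> verts H" "v \<in> verts H"
  then have "(adj H)\<^sup>*\<^sup>* u h" "(adj H)\<^sup>*\<^sup>* v h" using assms(2) by auto
  then show "(adj H)\<^sup>*\<^sup>* u v" using reach_sym reach_trans by metis
qed

lemma card_filter_bij:
  assumes "bij_betw \<psi> E E'" "\<forall>l\<in>E. Q' (\<psi> l) = Q l"
  shows "card {l'\<in>E'. Q' l'} = card {l\<in>E. Q l}"
proof -
  have im: "\<psi> ` E = E'" using assms(1) unfolding bij_betw_def by auto
  have "{l'\<in>E'. Q' l'} = \<psi> ` {l\<in>E. Q l}"
  proof
    show "{l'\<in>E'. Q' l'} \<subseteq> \<psi> ` {l\<in>E. Q l}"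
    proof
      fix l' assume "l' \<in> {l'\<in>E'. Q' l'}"
      then obtain l where "l \<in> E" "l' = \<psi> l" "Q' l'" using im by blast
      then show "l' \<in> \<psi> ` {l\<in>E. Q l}" using assms(2) by auto
    qed
    show "\<psi> ` {l\<in>E. Q l} \<subseteq> {l'\<in>E'. Q' l'}" using im assms(2) by auto
  qed
  moreover have "inj_on \<psi> {l\<in>E. Q l}"
    using assms unfolding bij_betw_def by (auto intro: inj_on_subset)
  ultimately show ?thesis by (simp add: card_image)
qed

section \<open>Isomorphisms\<close>

lemma bij_facts:
  assumes "bij_betw f A B"
  shows "\<forall>x\<in>A. f x \<in> B" "\<forall>y\<in>B. \<exists>x\<in>A. y = f x" "inj_on f A" "f ` A = B"
  using assms unfolding bij_betw_def by auto

definition iso :: "('a, 'b) mgraph \<Rightarrow> ('c, 'd) mgraph \<Rightarrow> ('a \<Rightarrow> 'c) \<Rightarrow> ('b \<Rightarrow> 'd) \<Rightarrow> bool" where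
  "iso H H' \<phi> \<psi> \<longleftrightarrow> bij_betw \<phi> (verts H) (verts H') \<and> bij_betw \<psi> (edges H) (edges H') \<and>
     (\<forall>l\<in>edges H. ends H l \<subseteq> verts H \<and> ends H' (\<psi> l) = \<phi> ` ends H l)"

lemma iso_sym:
  assumes "iso H H' \<phi> \<psi>"
  shows "iso H' H (inv_into (verts H) \<phi>) (inv_into (edges H) \<psi>)"
proof -
  have b1: "bij_betw \<phi> (verts H) (verts H')" and b2: "bij_betw \<psi> (edges H) (edges H')"
    and e: "\<forall>l\<in>edges H. ends H l \<subseteq> verts H \<and> ends H' (\<psi> l) = \<phi> ` ends H l"
    using assms unfolding iso_def by auto
  have "\<forall>l'\<in>edges H'. ends H' l' \<subseteq> verts H' \<and>
      ends H (inv_into (edges H) \<psi> l') = inv_into (verts H) \<phi> ` ends H' l'"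
  proof
    fix l' assume l': "l' \<in> edges H'"
    define l where "l = inv_into (edges H) \<psi> l'"
    have l: "l \<in> edges H" "\<psi> l = l'" using l' b2 unfolding l_def bij_betw_def
      by (auto intro: inv_into_into f_inv_into_f)
    have "ends H' l' = \<phi> ` ends H l" using e l by auto
    moreover have "ends H l \<subseteq> verts H" using e l by auto
    ultimately show "ends H' l' \<subseteq> verts H' \<and>
      ends H (inv_into (edges H) \<psi> l') = inv_into (verts H) \<phi> ` ends H' l'"
      using b1 unfolding bij_betw_def l_def[symmetric]
      by (auto simp: inv_into_image_cancel)
  qed
  then show ?thesis unfolding iso_def
    using bij_betw_inv_into[OF b1] bij_betw_inv_into[OF b2] by auto
qed

lemma iso_sub:
  assumes "iso H H' \<phi> \<psi>" "V \<subseteq> verts H" "E \<subseteq> edges H" "\<forall>l\<in>E. ends H l \<subseteq> V"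
  shows "iso \<lparr>verts = V, edges = E, ends = ends H\<rparr> \<lparr>verts = \<phi> ` V, edges = \<psi> ` E, ends = ends H'\<rparr> \<phi> \<psi>"
  using assms unfolding iso_def bij_betw_def by (auto intro: inj_on_subset)

lemma iso_deg:
  assumes "iso H H' \<phi> \<psi>" "v \<in> verts H"
  shows "deg H' (\<phi> v) = deg H v"
proof -
  have b1: "bij_betw \<phi> (verts H) (verts H')" and b2: "bij_betw \<psi> (edges H) (edges H')"
    and e: "\<forall>l\<in>edges H. ends H l \<subseteq> verts H \<and> ends H' (\<psi> l) = \<phi> ` ends H l"
    using assms unfolding iso_def by auto
  have inj: "inj_on \<phi> (verts H)" using b1 bij_betw_def by auto
  have c1: "card {l'\<in>edges H'. \<phi> v \<in> ends H' l' \<and> card (ends H' l') = 2}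
     = card {l\<in>edges H. v \<in> ends H l \<and> card (ends H l) = 2}"
  proof (rule card_filter_bij[OF b2], intro ballI)
    fix l assume l: "l \<in> edges H"
    have s: "ends H l \<subseteq> verts H" using e l by auto
    have "(\<phi> v \<in> \<phi> ` ends H l) = (v \<in> ends H l)"
      using inj s assms(2) by (meson inj_on_image_mem_iff)
    moreover have "card (\<phi> ` ends H l) = card (ends H l)"
      using inj s by (meson card_image inj_on_subset)
    ultimately show "(\<phi> v \<in> ends H' (\<psi> l) \<and> card (ends H' (\<psi> l)) = 2) =
         (v \<in> ends H l \<and> card (ends H l) = 2)" using e l by auto
  qed
  have c2: "card {l'\<in>edges H'. ends H' l' = {\<phi> v}}
     = card {l\<in>edges H. ends H l = {v}}"
  proof (rule card_filter_bij[OF b2], intro ballI)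
    fix l assume l: "l \<in> edges H"
    have s: "ends H l \<subseteq> verts H" using e l by auto
    have "(\<phi> ` ends H l = {\<phi> v}) = (ends H l = {v})"
    proof
      assume a: "\<phi> ` ends H l = {\<phi> v}"
      have "\<phi> ` ends H l = \<phi> ` {v}" using a by simp
      then show "ends H l = {v}" using inj s assms(2)
        by (metis inj_on_image_eq_iff empty_subsetI insert_subset)
    qed simp
    then show "(ends H' (\<psi> l) = {\<phi> v}) = (ends H l = {v})" using e l by auto
  qed
  show ?thesis unfolding deg_def using c1 c2 by simp
qed

lemma iso_adj:
  assumes "iso H H' \<phi> \<psi>" "adj H u v"
  shows "adj H' (\<phi> u) (\<phi> v) \<and> u \<in> verts H \<and> v \<in> verts H"
proof -
  obtain l where l: "l \<in> edges H" "u \<in> ends H l" "v \<in> ends H l"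
    using assms(2) unfolding adj_def by blast
  have "\<psi> l \<in> edges H'" "ends H' (\<psi> l) = \<phi> ` ends H l" "ends H l \<subseteq> verts H"
    using assms(1) l(1) unfolding iso_def bij_betw_def by auto
  then show ?thesis unfolding adj_def using l by blast
qed

lemma iso_reach:
  assumes "iso H H' \<phi> \<psi>" "(adj H)\<^sup>*\<^sup>* u v"
  shows "(adj H')\<^sup>*\<^sup>* (\<phi> u) (\<phi> v)"
  using assms(2)
proof (induction rule: rtranclp_induct)
  case base then show ?case by simp
next
  case (step y z)
  then show ?case using iso_adj[OF assms(1) step(2)]
    by (meson rtranclp.rtrancl_into_rtrancl)
qed

lemma iso_connected:
  assumes "iso H H' \<phi> \<psi>" "connected H"
  shows "connected H'"
proof -
  have b1: "bij_betw \<phi> (verts H) (verts H')" using assms unfolding iso_def by auto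
  show ?thesis unfolding connected_def
  proof (intro conjI ballI)
    show "verts H' \<noteq> {}" using assms(2) b1 unfolding connected_def bij_betw_def by auto
  next
    fix u' v' assume "u' \<in> verts H'" "v' \<in> verts H'"
    then obtain u v where "u \<in> verts H" "v \<in> verts H" "u' = \<phi> u" "v' = \<phi> v"
      using bij_facts(2)[OF b1] by meson
    then show "(adj H')\<^sup>*\<^sup>* u' v'" using iso_reach[OF assms(1)] assms(2)
      unfolding connected_def by blast
  qed
qed

lemma iso_wf:
  assumes "iso H H' \<phi> \<psi>" "wf_mgraph H"
  shows "wf_mgraph H'"
proof -
  have b1: "bij_betw \<phi> (verts H) (verts H')" and b2: "bij_betw \<psi> (edges H) (edges H')"
    and e: "\<forall>l\<in>edges H. ends H l \<subseteq> verts H \<and> ends H' (\<psi> l) = \<phi> ` ends H l"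
    using assms unfolding iso_def by auto
  have inj: "inj_on \<phi> (verts H)" using b1 bij_betw_def by auto
  have f1: "finite (verts H')" using assms(2) bij_facts(4)[OF b1] unfolding wf_mgraph_def by (metis finite_imageI)
  have f2: "finite (edges H')" using assms(2) bij_facts(4)[OF b2] unfolding wf_mgraph_def by (metis finite_imageI)
  have f3: "\<forall>l'\<in>edges H'. ends H' l' \<subseteq> verts H' \<and> (card (ends H' l') = 1 \<or> card (ends H' l') = 2)"
  proof
    fix l' assume "l' \<in> edges H'"
    then obtain l where l: "l \<in> edges H" "l' = \<psi> l" using bij_facts(2)[OF b2] by meson
    have "card (\<phi> ` ends H l) = card (ends H l)"
      using inj e l by (meson card_image inj_on_subset)
    moreover have "card (ends H l) = 1 \<or> card (ends H l) = 2" using assms(2) l unfolding wf_mgraph_def by auto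
    moreover have "\<phi> ` ends H l \<subseteq> verts H'" using e l bij_facts(1)[OF b1] by auto
    ultimately show "ends H' l' \<subseteq> verts H' \<and> (card (ends H' l') = 1 \<or> card (ends H' l') = 2)"
      using l e by auto
  qed
  show ?thesis unfolding wf_mgraph_def using f1 f2 f3 by blast
qed

lemma iso_del_vert:
  assumes "iso H H' \<phi> \<psi>" "v \<in> verts H"
  shows "iso (del_vert H v) (del_vert H' (\<phi> v)) \<phi> \<psi>"
proof -
  have b1: "bij_betw \<phi> (verts H) (verts H')" and b2: "bij_betw \<psi> (edges H) (edges H')"
    and e: "\<forall>l\<in>edges H. ends H l \<subseteq> verts H \<and> ends H' (\<psi> l) = \<phi> ` ends H l"
    using assms unfolding iso_def by auto
  have inj: "inj_on \<phi> (verts H)" using b1 bij_betw_def by auto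
  have i: "iso \<lparr>verts = verts H - {v}, edges = {l\<in>edges H. v \<notin> ends H l}, ends = ends H\<rparr>
     \<lparr>verts = \<phi> ` (verts H - {v}), edges = \<psi> ` {l\<in>edges H. v \<notin> ends H l}, ends = ends H'\<rparr> \<phi> \<psi>"
    by (rule iso_sub[OF assms(1)]) (use e in auto)
  have v1: "\<phi> ` (verts H - {v}) = verts H' - {\<phi> v}"
    using b1 assms(2) inj unfolding bij_betw_def by (auto simp: inj_on_image_set_diff)
  have v2: "\<psi> ` {l\<in>edges H. v \<notin> ends H l} = {l'\<in>edges H'. \<phi> v \<notin> ends H' l'}"
  proof -
    have "\<forall>l\<in>edges H. (\<phi> v \<in> ends H' (\<psi> l)) = (v \<in> ends H l)"
      using e inj assms(2) by (metis inj_on_image_mem_iff)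
    then show ?thesis using bij_facts[OF b2] by auto
  qed
  show ?thesis using i v1 v2 unfolding del_vert_eq by simp
qed

lemma iso_del_edges:
  assumes "iso H H' \<phi> \<psi>" "F \<subseteq> edges H"
  shows "iso (del_edges H F) (del_edges H' (\<psi> ` F)) \<phi> \<psi>"
proof -
  have b1: "bij_betw \<phi> (verts H) (verts H')" and b2: "bij_betw \<psi> (edges H) (edges H')"
    and e: "\<forall>l\<in>edges H. ends H l \<subseteq> verts H \<and> ends H' (\<psi> l) = \<phi> ` ends H l"
    using assms unfolding iso_def by auto
  have i: "iso \<lparr>verts = verts H, edges = edges H - F, ends = ends H\<rparr>
     \<lparr>verts = \<phi> ` verts H, edges = \<psi> ` (edges H - F), ends = ends H'\<rparr> \<phi> \<psi>"
    by (rule iso_sub[OF assms(1)]) (use e in auto)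
  have "\<psi> ` (edges H - F) = edges H' - \<psi> ` F"
    using inj_on_image_set_diff[of \<psi> "edges H" "edges H" F] bij_facts(3,4)[OF b2] assms(2) by auto
  then show ?thesis using i bij_facts(4)[OF b1] unfolding del_edges_eq by simp
qed

lemma iso_two_connected:
  assumes "iso H H' \<phi> \<psi>" "two_connected H"
  shows "two_connected H'"
proof -
  have b1: "bij_betw \<phi> (verts H) (verts H')" using assms unfolding iso_def by auto
  have "card (verts H') = card (verts H)" using b1 by (simp add: bij_betw_same_card)
  moreover have "\<forall>v'\<in>verts H'. connected (del_vert H' v')"
  proof
    fix v' assume "v' \<in> verts H'"
    then obtain v where v: "v \<in> verts H" "v' = \<phi> v" using bij_facts(2)[OF b1] by meson
    then show "connected (del_vert H' v')"
      using iso_connected[OF iso_del_vert[OF assms(1) v(1)]] assms(2)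
      unfolding two_connected_def by auto
  qed
  ultimately show ?thesis using assms iso_wf iso_connected unfolding two_connected_def by metis
qed

lemma iso_cubic:
  assumes "iso H H' \<phi> \<psi>" "cubic H"
  shows "cubic H'"
proof -
  have b1: "bij_betw \<phi> (verts H) (verts H')" using assms unfolding iso_def by auto
  show ?thesis unfolding cubic_def
  proof (intro conjI ballI)
    show "wf_mgraph H'" using iso_wf assms unfolding cubic_def by blast
  next
    fix v' assume "v' \<in> verts H'"
    then obtain v where v: "v \<in> verts H" "v' = \<phi> v" using bij_facts(2)[OF b1] by meson
    then show "deg H' v' = 3" using iso_deg[OF assms(1) v(1)] assms(2) unfolding cubic_def by auto
  qed
qed

lemma iso_two_edge_cut:
  assumes "iso H H' \<phi> \<psi>" "two_edge_cut H F"
  shows "two_edge_cut H' (\<psi> ` F)"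
proof -
  have b2: "bij_betw \<psi> (edges H) (edges H')" using assms unfolding iso_def by auto
  have F: "F \<subseteq> edges H" "card F = 2" "\<not> connected (del_edges H F)"
    using assms(2) unfolding two_edge_cut_def by auto
  have "card (\<psi> ` F) = 2" using F b2 unfolding bij_betw_def
    by (metis card_image inj_on_subset)
  moreover have "\<psi> ` F \<subseteq> edges H'" using F b2 unfolding bij_betw_def by auto
  moreover have "\<not> connected (del_edges H' (\<psi> ` F))"
  proof
    assume c: "connected (del_edges H' (\<psi> ` F))"
    have i: "iso (del_edges H F) (del_edges H' (\<psi> ` F)) \<phi> \<psi>" by (rule iso_del_edges[OF assms(1) F(1)])
    show False using iso_connected[OF iso_sym[OF i] c] F(3) by blast
  qed
  ultimately show ?thesis unfolding two_edge_cut_def by auto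
qed

lemma iso_edges_adjacent:
  assumes "iso H H' \<phi> \<psi>" "edges_adjacent H a b" "a \<in> edges H" "b \<in> edges H"
  shows "edges_adjacent H' (\<psi> a) (\<psi> b)"
proof -
  have b2: "bij_betw \<psi> (edges H) (edges H')"
    and e: "\<forall>l\<in>edges H. ends H l \<subseteq> verts H \<and> ends H' (\<psi> l) = \<phi> ` ends H l"
    using assms unfolding iso_def by auto
  have "a \<noteq> b" and "ends H a \<inter> ends H b \<noteq> {}" using assms(2) unfolding edges_adjacent_def by auto
  then obtain x where "x \<in> ends H a" "x \<in> ends H b" by blast
  then have "\<phi> x \<in> ends H' (\<psi> a) \<inter> ends H' (\<psi> b)" using e assms(3,4) by auto
  moreover have "\<psi> a \<noteq> \<psi> b" using bij_facts(3)[OF b2] assms(3,4) \<open>a \<noteq> b\<close> inj_on_contraD by metis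
  ultimately show ?thesis unfolding edges_adjacent_def by blast
qed

lemma iso_is_cycle:
  assumes "iso H H' \<phi> \<psi>" "is_cycle H CV CE"
  shows "is_cycle H' (\<phi> ` CV) (\<psi> ` CE)"
proof -
  have b1: "bij_betw \<phi> (verts H) (verts H')" and b2: "bij_betw \<psi> (edges H) (edges H')"
    and e: "\<forall>l\<in>edges H. ends H l \<subseteq> verts H \<and> ends H' (\<psi> l) = \<phi> ` ends H l"
    using assms unfolding iso_def by auto
  have c: "CV \<noteq> {}" "CV \<subseteq> verts H" "CE \<subseteq> edges H" "\<forall>l\<in>CE. ends H l \<subseteq> CV"
    "\<forall>v\<in>CV. deg \<lparr>verts = CV, edges = CE, ends = ends H\<rparr> v = 2"
    "connected \<lparr>verts = CV, edges = CE, ends = ends H\<rparr>"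
    using assms(2) unfolding is_cycle_def by auto
  have i: "iso \<lparr>verts = CV, edges = CE, ends = ends H\<rparr> \<lparr>verts = \<phi> ` CV, edges = \<psi> ` CE, ends = ends H'\<rparr> \<phi> \<psi>"
    by (rule iso_sub[OF assms(1) c(2,3,4)])
  have g1: "\<phi> ` CV \<noteq> {}" using c by auto
  have g2: "\<phi> ` CV \<subseteq> verts H'" using c bij_facts(1)[OF b1] by auto
  have g3: "\<psi> ` CE \<subseteq> edges H'" using c bij_facts(1)[OF b2] by auto
  have g4: "connected \<lparr>verts = \<phi> ` CV, edges = \<psi> ` CE, ends = ends H'\<rparr>"
    using iso_connected[OF i c(6)] .
  have g5: "\<forall>l'\<in>\<psi> ` CE. ends H' l' \<subseteq> \<phi> ` CV"
  proof
    fix l' assume "l' \<in> \<psi> ` CE"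
    then obtain l where l: "l \<in> CE" "l' = \<psi> l" by auto
    then have "l \<in> edges H" using c by auto
    then have "ends H' l' = \<phi> ` ends H l" using e l by auto
    moreover have "ends H l \<subseteq> CV" using c(4) l(1) by blast
    ultimately show "ends H' l' \<subseteq> \<phi> ` CV" by (simp add: image_mono)
  qed
  have g6: "\<forall>v'\<in>\<phi> ` CV. deg \<lparr>verts = \<phi> ` CV, edges = \<psi> ` CE, ends = ends H'\<rparr> v' = 2"
  proof
    fix v' assume "v' \<in> \<phi> ` CV"
    then obtain v where v: "v \<in> CV" "v' = \<phi> v" by auto
    have "deg \<lparr>verts = \<phi> ` CV, edges = \<psi> ` CE, ends = ends H'\<rparr> (\<phi> v) = deg \<lparr>verts = CV, edges = CE, ends = ends H\<rparr> v"
      using iso_deg[OF i] v(1) by simp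
    then show "deg \<lparr>verts = \<phi> ` CV, edges = \<psi> ` CE, ends = ends H'\<rparr> v' = 2"
      using c(5) v by simp
  qed
  show ?thesis unfolding is_cycle_def using g1 g2 g3 g4 g5 g6 by blast
qed

lemma nat_copy:
  fixes H :: "('a, 'b) mgraph"
  assumes "finite (verts H)" "finite (edges H)" "\<forall>l\<in>edges H. ends H l \<subseteq> verts H"
  shows "\<exists>(H' :: (nat, nat) mgraph) \<phi> \<psi>. iso H H' \<phi> \<psi>"
proof -
  obtain \<phi> :: "'a \<Rightarrow> nat" and k where p: "\<phi> ` verts H = {i. i < k}" "inj_on \<phi> (verts H)"
    using finite_imp_inj_to_nat_seg[OF assms(1)] by blast
  obtain \<psi> :: "'b \<Rightarrow> nat" and m where q: "\<psi> ` edges H = {i. i < m}" "inj_on \<psi> (edges H)"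
    using finite_imp_inj_to_nat_seg[OF assms(2)] by blast
  define H' where "H' = \<lparr>verts = \<phi> ` verts H, edges = \<psi> ` edges H,
     ends = (\<lambda>k. \<phi> ` ends H (inv_into (edges H) \<psi> k))\<rparr>"
  have "bij_betw \<phi> (verts H) (verts H')" unfolding H'_def bij_betw_def using p by simp
  moreover have "bij_betw \<psi> (edges H) (edges H')" unfolding H'_def bij_betw_def using q by simp
  moreover have "\<forall>l\<in>edges H. ends H l \<subseteq> verts H \<and> ends H' (\<psi> l) = \<phi> ` ends H l"
  proof
    fix l assume l: "l \<in> edges H"
    have "inv_into (edges H) \<psi> (\<psi> l) = l" using q(2) l by (rule inv_into_f_f)
    then show "ends H l \<subseteq> verts H \<and> ends H' (\<psi> l) = \<phi> ` ends H l"
      using assms(3) l unfolding H'_def by simp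
  qed
  ultimately have "iso H H' \<phi> \<psi>" unfolding iso_def by blast
  then show ?thesis by blast
qed




lemma deg_loopless:
  assumes "\<forall>l\<in>edges H. card (ends H l) = 2"
  shows "deg H v = card {l\<in>edges H. v \<in> ends H l}"
proof -
  have e0: "{l\<in>edges H. ends H l = {v}} = {}" using assms by fastforce
  have "card {l\<in>edges H. ends H l = {v}} = 0" by (subst e0) simp
  moreover have "{l\<in>edges H. v \<in> ends H l \<and> card (ends H l) = 2} = {l\<in>edges H. v \<in> ends H l}"
    using assms by auto
  ultimately show ?thesis unfolding deg_def by simp
qed

lemma card2_ends:
  assumes "card A = 2"
  obtains p q where "A = {p, q}" "p \<noteq> q"
  using assms by (meson card_2_iff)

definition Hg :: "('v, 'e) mgraph \<Rightarrow> 'v set \<Rightarrow> ('v option, 'e) mgraph" where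
  "Hg G Y = \<lparr>verts = Some ` Y \<union> {None}, edges = {l\<in>edges G. ends G l \<inter> Y \<noteq> {}},
     ends = (\<lambda>l. Some ` (ends G l \<inter> Y) \<union> (if ends G l \<subseteq> Y then {} else {None}))\<rparr>"

lemma Hg_simps:
  "verts (Hg G Y) = Some ` Y \<union> {None}"
  "edges (Hg G Y) = {l\<in>edges G. ends G l \<inter> Y \<noteq> {}}"
  "ends (Hg G Y) l = Some ` (ends G l \<inter> Y) \<union> (if ends G l \<subseteq> Y then {} else {None})"
  unfolding Hg_def by simp_all

lemma Hg_Some_in: "(Some a \<in> ends (Hg G Y) l) = (a \<in> ends G l \<and> a \<in> Y)"
  by (auto simp: Hg_simps)

lemma Hg_None_in: "(None \<in> ends (Hg G Y) l) = (\<not> ends G l \<subseteq> Y)"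
  by (auto simp: Hg_simps)

lemma Hg_card:
  assumes "card (ends G l) = 2" "ends G l \<inter> Y \<noteq> {}"
  shows "card (ends (Hg G Y) l) = 2"
proof -
  obtain p q where pq: "ends G l = {p, q}" "p \<noteq> q" using card2_ends[OF assms(1)] by blast
  consider "p \<in> Y" "q \<in> Y" | "p \<in> Y" "q \<notin> Y" | "p \<notin> Y" "q \<in> Y"
    using assms(2) pq by auto
  then show ?thesis
  proof cases
    case 1 then show ?thesis using pq by (simp add: Hg_simps)
  next
    case 2
    then have "ends (Hg G Y) l = {Some p, None}" using pq by (auto simp: Hg_simps)
    then show ?thesis by simp
  next
    case 3
    then have "ends (Hg G Y) l = {Some q, None}" using pq by (auto simp: Hg_simps)
    then show ?thesis by simp
  qed
qed

lemma Hg_lift: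
  assumes "(adj Ga)\<^sup>*\<^sup>* u y" "u \<in> Y"
    and "edges Ga \<subseteq> edges G" "ends Ga = ends G"
    and "ends Hb = ends (Hg G Y)" "\<forall>l\<in>edges (Hg G Y). l \<in> edges Ga \<longrightarrow> l \<in> edges Hb"
  shows "(y \<in> Y \<longrightarrow> (adj Hb)\<^sup>*\<^sup>* (Some u) (Some y)) \<and> (y \<notin> Y \<longrightarrow> (adj Hb)\<^sup>*\<^sup>* (Some u) None)"
  using assms(1)
proof (induction rule: rtranclp_induct)
  case base then show ?case using assms(2) by simp
next
  case (step y z)
  obtain l where l: "l \<in> edges Ga" "y \<in> ends G l" "z \<in> ends G l"
    using step(2) assms(4) unfolding adj_def by auto
  have lG: "l \<in> edges G" using l assms(3) by auto
  show ?case
  proof (cases "y \<in> Y")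
    case True
    then have lH: "l \<in> edges Hb" using assms(6) l lG by (auto simp: Hg_simps)
    have r: "(adj Hb)\<^sup>*\<^sup>* (Some u) (Some y)" using step(3) True by auto
    have sy: "Some y \<in> ends Hb l" using assms(5) l True by (simp add: Hg_Some_in)
    show ?thesis
    proof (intro conjI impI)
      assume "z \<in> Y"
      then have "Some z \<in> ends Hb l" using assms(5) l by (simp add: Hg_Some_in)
      then have "adj Hb (Some y) (Some z)" using lH sy unfolding adj_def by blast
      then show "(adj Hb)\<^sup>*\<^sup>* (Some u) (Some z)" using r by (meson rtranclp.rtrancl_into_rtrancl)
    next
      assume "z \<notin> Y"
      then have "None \<in> ends Hb l" using assms(5) l by (simp add: Hg_None_in) blast
      then have "adj Hb (Some y) None" using lH sy unfolding adj_def by blast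
      then show "(adj Hb)\<^sup>*\<^sup>* (Some u) None" using r by (meson rtranclp.rtrancl_into_rtrancl)
    qed
  next
    case False
    have r: "(adj Hb)\<^sup>*\<^sup>* (Some u) None" using step(3) False by auto
    show ?thesis
    proof (intro conjI impI)
      assume zY: "z \<in> Y"
      then have lH: "l \<in> edges Hb" using assms(6) l lG by (auto simp: Hg_simps)
      have "Some z \<in> ends Hb l" using assms(5) l zY by (simp add: Hg_Some_in)
      moreover have "None \<in> ends Hb l" using assms(5) l False by (simp add: Hg_None_in) blast
      ultimately have "adj Hb None (Some z)" using lH unfolding adj_def by blast
      then show "(adj Hb)\<^sup>*\<^sup>* (Some u) (Some z)" using r by (meson rtranclp.rtrancl_into_rtrancl)
    next
      assume "z \<notin> Y"
      then show "(adj Hb)\<^sup>*\<^sup>* (Some u) None" using r by simp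
    qed
  qed
qed


locale setting =
  fixes G :: "('v, 'e) mgraph" and n s :: nat and X :: "nat \<Rightarrow> 'v set" and e f :: 'e
  assumes n4: "n \<ge> 4" and star: "star_property n" and tc: "two_connected G" and cub: "cubic G"
    and cardG: "card (verts G) = n" and eG: "e \<in> edges G" and fG: "f \<in> edges G"
    and cut: "\<forall>F. two_edge_cut G F \<longrightarrow> separates G F e f"
    and Xsub: "\<forall>i\<in>{1..s}. X i \<subseteq> verts G - (ends G e \<union> ends G f)"
    and Xdisj: "\<forall>i\<in>{1..s}. \<forall>j\<in>{1..s}. i \<noteq> j \<longrightarrow> X i \<inter> X j = {}"
    and Xcard: "\<forall>i\<in>{1..s}. card (X i) \<ge> 2"
    and Xconn: "\<forall>i\<in>{1..s}. connected (induced G (X i))"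
    and cubc: "cubic (contract G X s)"
begin

lemma wfG: "wf_mgraph G" using tc unfolding two_connected_def by auto

lemma finV: "finite (verts G)" using wfG unfolding wf_mgraph_def by auto
lemma finE: "finite (edges G)" using wfG unfolding wf_mgraph_def by auto
lemma endsV: "l \<in> edges G \<Longrightarrow> ends G l \<subseteq> verts G" using wfG unfolding wf_mgraph_def by auto

lemma loopless: "l \<in> edges G \<Longrightarrow> card (ends G l) = 2"
proof (rule ccontr)
  assume l: "l \<in> edges G" and nc: "card (ends G l) \<noteq> 2"
  then have "card (ends G l) = 1" using wfG unfolding wf_mgraph_def by auto
  then obtain c where c: "ends G l = {c}" by (meson card_1_singletonE)
  have cV: "c \<in> verts G" using endsV[OF l] c by auto
  define A where "A = {l\<in>edges G. c \<in> ends G l \<and> card (ends G l) = 2}"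
  define B where "B = {l\<in>edges G. ends G l = {c}}"
  have d3: "card A + 2 * card B = 3" using cub cV unfolding cubic_def deg_def A_def B_def by auto
  have "l \<in> B" using l c unfolding B_def by auto
  moreover have "finite B" using finE unfolding B_def by auto
  ultimately have "card B \<ge> 1" by (metis One_nat_def Suc_leI card_gt_0_iff empty_iff)
  then have cA: "card A = 1" using d3 by presburger
  then obtain g where gA: "A = {g}" by (meson card_1_singletonE)
  then have g: "g \<in> edges G" "c \<in> ends G g" "card (ends G g) = 2" unfolding A_def by auto
  obtain p q where pq: "ends G g = {p, q}" "p \<noteq> q" using card2_ends[OF g(3)] by blast
  obtain d where d: "ends G g = {c, d}" "d \<noteq> c" using pq g(2) by (metis insert_commute insertE singletonD)
  have dV: "d \<in> verts G" using endsV[OF g(1)] d by auto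
  obtain y where y: "y \<in> verts G" "y \<noteq> c" "y \<noteq> d"
  proof -
    have "\<not> verts G \<subseteq> {c, d}"
    proof
      assume "verts G \<subseteq> {c, d}"
      then have "card (verts G) \<le> 2" by (metis card_2_iff d(2) card_mono finite.emptyI finite_insert)
      then show False using cardG n4 by simp
    qed
    then show ?thesis using that by blast
  qed
  have "connected (del_vert G d)" using tc dV unfolding two_connected_def by auto
  then have r: "(adj (del_vert G d))\<^sup>*\<^sup>* c y" using y cV d unfolding connected_def del_vert_eq by auto
  have "\<forall>z. (adj (del_vert G d))\<^sup>*\<^sup>* c z \<longrightarrow> z = c"
  proof (intro allI impI)
    fix z assume "(adj (del_vert G d))\<^sup>*\<^sup>* c z"
    then show "z = c"
    proof (induction rule: rtranclp_induct)
      case base then show ?case by simp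
    next
      case (step z z')
      then obtain l' where l': "l' \<in> edges G" "d \<notin> ends G l'" "c \<in> ends G l'" "z' \<in> ends G l'"
        unfolding adj_def del_vert_eq by auto
      have "card (ends G l') = 1 \<or> card (ends G l') = 2" using wfG l' unfolding wf_mgraph_def by auto
      then show ?case
      proof
        assume "card (ends G l') = 2"
        then have "l' \<in> A" using l' unfolding A_def by auto
        then have "l' = g" using gA by auto
        then show ?case using l'(2) d by auto
      next
        assume "card (ends G l') = 1"
        then obtain c' where "ends G l' = {c'}" by (meson card_1_singletonE)
        then show ?case using l' by auto
      qed
    qed
  qed
  then show False using r y by auto
qed

lemma degV: "v \<in> verts G \<Longrightarrow> card {l\<in>edges G. v \<in> ends G l} = 3"
  using cub deg_loopless[of G v] loopless unfolding cubic_def by auto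

lemma other_end:
  assumes "l \<in> edges G" "c \<in> ends G l"
  obtains d where "ends G l = {c, d}" "d \<noteq> c"
proof -
  obtain p q where pq: "ends G l = {p, q}" "p \<noteq> q" using card2_ends[OF loopless[OF assms(1)]] by blast
  then show ?thesis using that assms(2) by (metis insert_commute insertE singletonD)
qed

lemma bridgeless:
  assumes l: "l \<in> edges G"
  shows "connected (del_edges G {l})"
proof -
  obtain c where "c \<in> ends G l" using loopless[OF l] by fastforce
  then obtain d where cd: "ends G l = {c, d}" "d \<noteq> c" using other_end l by blast
  have dV: "d \<in> verts G" and cV: "c \<in> verts G" using endsV[OF l] cd by auto
  have conc: "connected (del_vert G c)" using tc cV unfolding two_connected_def by auto
  have sub: "edges (del_vert G c) \<subseteq> edges (del_edges G {l})" "ends (del_vert G c) = ends (del_edges G {l})"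
    using cd unfolding del_vert_eq del_edges_eq by auto
  have main: "(adj (del_edges G {l}))\<^sup>*\<^sup>* y d" if y: "y \<in> verts G" "y \<noteq> c" for y
  proof -
    have "(adj (del_vert G c))\<^sup>*\<^sup>* y d" using conc y dV cd unfolding connected_def del_vert_eq by auto
    then show ?thesis using reach_mono sub by metis
  qed
  have "(adj (del_edges G {l}))\<^sup>*\<^sup>* c d"
  proof -
    have "card {l\<in>edges G. c \<in> ends G l} = 3" using degV cV by auto
    moreover have "card {l'\<in>edges G. c \<in> ends G l'} \<le> 1" if "{l'\<in>edges G. c \<in> ends G l'} \<subseteq> {l}"
      using card_mono[OF _ that] by simp
    ultimately have "\<not> {l'\<in>edges G. c \<in> ends G l'} \<subseteq> {l}" by auto
    then obtain g where g: "g \<in> edges G" "c \<in> ends G g" "g \<noteq> l" by blast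
    obtain y where y: "ends G g = {c, y}" "y \<noteq> c" using other_end g by blast
    have "adj (del_edges G {l}) c y" using g y unfolding adj_def del_edges_eq by auto
    moreover have "y \<in> verts G" using endsV[OF g(1)] y by auto
    ultimately show ?thesis using main y by (meson converse_rtranclp_into_rtranclp)
  qed
  then show ?thesis using main dV by (intro connected_hub[of d]) (auto simp: del_edges_eq)
qed

lemma two_cut_reach:
  assumes "g1 \<in> edges G" "g2 \<in> edges G" "g1 \<noteq> g2" "ends G g2 = {c, d}" "y \<in> verts G"
  shows "(adj (del_edges G {g1, g2}))\<^sup>*\<^sup>* y c \<or> (adj (del_edges G {g1, g2}))\<^sup>*\<^sup>* y d"
proof -
  have cV: "c \<in> verts G" using endsV[OF assms(2)] assms(4) by auto
  have "(adj (del_edges G {g1}))\<^sup>*\<^sup>* y c" using bridgeless[OF assms(1)] assms(5) cV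
    unfolding connected_def del_edges_eq by auto
  then show ?thesis
  proof (induction rule: converse_rtranclp_induct)
    case base then show ?case by simp
  next
    case (step y y')
    then obtain l' where l': "l' \<in> edges G" "l' \<noteq> g1" "y \<in> ends G l'" "y' \<in> ends G l'"
      unfolding adj_def del_edges_eq by auto
    show ?case
    proof (cases "l' = g2")
      case True
      then have "y = c \<or> y = d" using l' assms(4) by auto
      then show ?thesis by auto
    next
      case False
      then have "adj (del_edges G {g1, g2}) y y'" using l' unfolding adj_def del_edges_eq by auto
      then show ?thesis using step(3) by (meson converse_rtranclp_into_rtranclp)
    qed
  qed
qed

lemma escape:
  assumes "F \<subseteq> edges G" "card F = 2" "u \<in> verts G"
  shows "\<exists>p\<in>ends G e \<union> ends G f. (adj (del_edges G F))\<^sup>*\<^sup>* u p"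
proof (cases "connected (del_edges G F)")
  case True
  obtain p where p: "p \<in> ends G e" using loopless[OF eG] by fastforce
  then have "p \<in> verts G" using endsV[OF eG] by auto
  then show ?thesis using True assms(3) p unfolding connected_def del_edges_eq by auto
next
  case False
  then have "two_edge_cut G F" using assms unfolding two_edge_cut_def by auto
  then have sep: "separates G F e f" using cut by auto
  then have nr: "\<not> (\<exists>x\<in>ends G e. \<exists>y\<in>ends G f. (adj (del_edges G F))\<^sup>*\<^sup>* x y)"
    unfolding separates_def by auto
  obtain g1 g2 where F: "F = {g1, g2}" "g1 \<noteq> g2" using assms(2) card_2_iff by metis
  have g: "g1 \<in> edges G" "g2 \<in> edges G" using F assms(1) by auto
  obtain c where "c \<in> ends G g2" using loopless[OF g(2)] by fastforce
  then obtain d where cd: "ends G g2 = {c, d}" using other_end g(2) by metis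
  obtain pe where pe: "pe \<in> ends G e" using loopless[OF eG] by fastforce
  obtain pf where pf: "pf \<in> ends G f" using loopless[OF fG] by fastforce
  have V: "pe \<in> verts G" "pf \<in> verts G" using pe pf endsV eG fG by auto
  let ?R = "(adj (del_edges G F))\<^sup>*\<^sup>*"
  have ru: "?R u c \<or> ?R u d" using two_cut_reach[OF g F(2) cd assms(3)] F by simp
  have re: "?R pe c \<or> ?R pe d" using two_cut_reach[OF g F(2) cd V(1)] F by simp
  have rf: "?R pf c \<or> ?R pf d" using two_cut_reach[OF g F(2) cd V(2)] F by simp
  have "\<not> ?R pe pf" using nr pe pf by auto
  have "?R u pe \<or> ?R u pf"
  proof (rule ccontr)
    assume a: "\<not> (?R u pe \<or> ?R u pf)"
    have s1: "?R x y \<Longrightarrow> ?R y x" for x y using reach_sym by metis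
    have t1: "?R x y \<Longrightarrow> ?R y z \<Longrightarrow> ?R x z" for x y z by (rule rtranclp_trans)
    show False
    proof (cases "?R u c")
      case True
      then have "\<not> ?R pe c" "\<not> ?R pf c" using a s1 t1 by blast+
      then have "?R pe d" "?R pf d" using re rf by auto
      then show False using \<open>\<not> ?R pe pf\<close> s1 t1 by blast
    next
      case False
      then have "?R u d" using ru by auto
      then have "\<not> ?R pe d" "\<not> ?R pf d" using a s1 t1 by blast+
      then have "?R pe c" "?R pf c" using re rf by auto
      then show False using \<open>\<not> ?R pe pf\<close> s1 t1 by blast
    qed
  qed
  then show ?thesis using pe pf by auto
qed

end


context setting begin

lemma cls_in:
  assumes "i \<in> {1..s}" "u \<in> X i"
  shows "cls s X u = X i"
proof -
  have ex: "\<exists>j. j \<in> {1..s} \<and> u \<in> X j" using assms by blast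
  define j where "j = (SOME j. j \<in> {1..s} \<and> u \<in> X j)"
  have j: "j \<in> {1..s}" "u \<in> X j" using someI_ex[OF ex] unfolding j_def by auto
  have "j = i" using Xdisj assms j by blast
  then show ?thesis unfolding cls_def using assms j_def by auto
qed

lemma cls_out:
  assumes "\<forall>i\<in>{1..s}. u \<notin> X i"
  shows "cls s X u = {u}"
  using assms unfolding cls_def by auto

lemma X_ne: "i \<in> {1..s} \<Longrightarrow> X i \<noteq> {}"
  using Xcard by fastforce

lemma X_notsingle: "i \<in> {1..s} \<Longrightarrow> X i \<noteq> {v}"
  using Xcard by fastforce

lemma cls_eq_X:
  assumes "i \<in> {1..s}"
  shows "(cls s X u = X i) = (u \<in> X i)"
proof
  assume c: "cls s X u = X i"
  show "u \<in> X i"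
  proof (cases "\<exists>j\<in>{1..s}. u \<in> X j")
    case True
    then obtain j where j: "j \<in> {1..s}" "u \<in> X j" by blast
    then have "X j = X i" using c cls_in by auto
    then show ?thesis using j by auto
  next
    case False
    then have "cls s X u = {u}" using cls_out by auto
    then show ?thesis using c X_notsingle assms by auto
  qed
qed (use cls_in assms in auto)

lemma cls_single:
  assumes "cls s X u = {v}"
  shows "u = v" "\<forall>i\<in>{1..s}. u \<notin> X i"
proof -
  show "\<forall>i\<in>{1..s}. u \<notin> X i"
    using assms cls_in X_notsingle by metis
  then show "u = v" using assms cls_out by auto
qed

lemma X_fin: "i \<in> {1..s} \<Longrightarrow> finite (X i)"
  using Xsub finV by (meson Diff_subset finite_subset)

lemma X_V: "i \<in> {1..s} \<Longrightarrow> X i \<subseteq> verts G"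
  using Xsub by auto

lemma X_e: "i \<in> {1..s} \<Longrightarrow> p \<in> ends G e \<union> ends G f \<Longrightarrow> p \<notin> X i"
  using Xsub by auto

lemma Hg_loopless: "i \<in> {1..s} \<Longrightarrow> l \<in> edges (Hg G (X i)) \<Longrightarrow> card (ends (Hg G (X i)) l) = 2"
proof -
  assume "l \<in> edges (Hg G (X i))"
  then have "l \<in> edges G" "ends G l \<inter> X i \<noteq> {}" by (auto simp: Hg_simps)
  then show ?thesis using Hg_card[OF loopless] by blast
qed

lemma Hg_wf:
  assumes "i \<in> {1..s}"
  shows "wf_mgraph (Hg G (X i))"
  unfolding wf_mgraph_def
proof (intro conjI ballI)
  show "finite (verts (Hg G (X i)))" using X_fin[OF assms] by (simp add: Hg_simps)
  show "finite (edges (Hg G (X i)))" using finE by (simp add: Hg_simps)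
next
  fix l assume l: "l \<in> edges (Hg G (X i))"
  show "ends (Hg G (X i)) l \<subseteq> verts (Hg G (X i))" by (auto simp: Hg_simps)
  show "card (ends (Hg G (X i)) l) = 1 \<or> card (ends (Hg G (X i)) l) = 2"
    using Hg_loopless[OF assms l] by simp
qed

lemma Hg_deg_Some:
  assumes "i \<in> {1..s}" "a \<in> X i"
  shows "deg (Hg G (X i)) (Some a) = 3"
proof -
  have "deg (Hg G (X i)) (Some a) = card {l\<in>edges (Hg G (X i)). Some a \<in> ends (Hg G (X i)) l}"
    by (rule deg_loopless) (use Hg_loopless[OF assms(1)] in blast)
  also have "{l\<in>edges (Hg G (X i)). Some a \<in> ends (Hg G (X i)) l} = {l\<in>edges G. a \<in> ends G l}"
    using assms(2) by (auto simp: Hg_simps Hg_Some_in)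
  also have "card {l\<in>edges G. a \<in> ends G l} = 3" using degV X_V assms by auto
  finally show ?thesis .
qed

lemma contract_edges_card:
  "L \<in> edges (contract G X s) \<Longrightarrow> card (ends (contract G X s) L) = 2"
  unfolding contract_def by auto

lemma boundary_char:
  assumes "i \<in> {1..s}" "l \<in> edges G"
  shows "(card (cls s X ` ends G l) = 2 \<and> X i \<in> cls s X ` ends G l) =
         (ends G l \<inter> X i \<noteq> {} \<and> \<not> ends G l \<subseteq> X i)"
proof -
  obtain p q where pq: "ends G l = {p, q}" "p \<noteq> q" using card2_ends[OF loopless[OF assms(2)]] by blast
  have cp: "(cls s X p = X i) = (p \<in> X i)" "(cls s X q = X i) = (q \<in> X i)"
    using cls_eq_X[OF assms(1)] by auto
  show ?thesis
  proof
    assume a: "card (cls s X ` ends G l) = 2 \<and> X i \<in> cls s X ` ends G l"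
    then have ne: "cls s X p \<noteq> cls s X q" using pq by (auto simp: card_insert_if)
    show "ends G l \<inter> X i \<noteq> {} \<and> \<not> ends G l \<subseteq> X i"
      using a ne pq cp by auto
  next
    assume a: "ends G l \<inter> X i \<noteq> {} \<and> \<not> ends G l \<subseteq> X i"
    then have "(p \<in> X i \<and> q \<notin> X i) \<or> (q \<in> X i \<and> p \<notin> X i)" using pq by auto
    then have "cls s X p \<noteq> cls s X q \<and> (cls s X p = X i \<or> cls s X q = X i)" using cp by auto
    then show "card (cls s X ` ends G l) = 2 \<and> X i \<in> cls s X ` ends G l" using pq by auto
  qed
qed

lemma Xi_vert: "i \<in> {1..s} \<Longrightarrow> X i \<in> verts (contract G X s)"
proof -
  assume i: "i \<in> {1..s}"
  obtain a where "a \<in> X i" using X_ne[OF i] by blast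
  then show ?thesis using cls_in[OF i] X_V[OF i] unfolding contract_def by force
qed

lemma Hg_deg_None:
  assumes "i \<in> {1..s}"
  shows "deg (Hg G (X i)) None = 3"
proof -
  let ?C = "contract G X s"
  have "deg ?C (X i) = 3" using cubc Xi_vert[OF assms] unfolding cubic_def by auto
  moreover have "deg ?C (X i) = card {L\<in>edges ?C. X i \<in> ends ?C L}"
    by (rule deg_loopless) (use contract_edges_card in blast)
  moreover have "{L\<in>edges ?C. X i \<in> ends ?C L} =
     (\<lambda>l. {l}) ` {l\<in>edges G. card (cls s X ` ends G l) = 2 \<and> X i \<in> cls s X ` ends G l}"
    unfolding contract_def by auto
  moreover have "card ((\<lambda>l. {l}) ` {l\<in>edges G. card (cls s X ` ends G l) = 2 \<and> X i \<in> cls s X ` ends G l})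
     = card {l\<in>edges G. card (cls s X ` ends G l) = 2 \<and> X i \<in> cls s X ` ends G l}"
    by (rule card_image) (auto simp: inj_on_def)
  moreover have "{l\<in>edges G. card (cls s X ` ends G l) = 2 \<and> X i \<in> cls s X ` ends G l}
     = {l\<in>edges G. ends G l \<inter> X i \<noteq> {} \<and> \<not> ends G l \<subseteq> X i}"
    using boundary_char[OF assms] by blast
  moreover have "deg (Hg G (X i)) None = card {l\<in>edges (Hg G (X i)). None \<in> ends (Hg G (X i)) l}"
    by (rule deg_loopless) (use Hg_loopless[OF assms] in blast)
  moreover have "{l\<in>edges (Hg G (X i)). None \<in> ends (Hg G (X i)) l}
     = {l\<in>edges G. ends G l \<inter> X i \<noteq> {} \<and> \<not> ends G l \<subseteq> X i}"
    by (auto simp: Hg_simps Hg_None_in)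
  ultimately show ?thesis by simp
qed

lemma Hg_cubic: "i \<in> {1..s} \<Longrightarrow> cubic (Hg G (X i))"
  unfolding cubic_def using Hg_wf Hg_deg_None Hg_deg_Some by (auto simp: Hg_simps)

lemma Hg_reach_None:
  assumes "i \<in> {1..s}" "u \<in> X i" "(adj Ga)\<^sup>*\<^sup>* u p" "p \<notin> X i"
    and "edges Ga \<subseteq> edges G" "ends Ga = ends G"
    and "ends Hb = ends (Hg G (X i))" "\<forall>l\<in>edges (Hg G (X i)). l \<in> edges Ga \<longrightarrow> l \<in> edges Hb"
  shows "(adj Hb)\<^sup>*\<^sup>* (Some u) None"
  using Hg_lift[OF assms(3) assms(2) assms(5-8)] assms(4) by blast

lemma Hg_connected:
  assumes "i \<in> {1..s}"
  shows "connected (Hg G (X i))"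
proof (rule connected_hub[of None])
  show "None \<in> verts (Hg G (X i))" by (simp add: Hg_simps)
  show "\<forall>u\<in>verts (Hg G (X i)). (adj (Hg G (X i)))\<^sup>*\<^sup>* u None"
  proof
    fix x assume "x \<in> verts (Hg G (X i))"
    then consider "x = None" | u where "x = Some u" "u \<in> X i" by (auto simp: Hg_simps)
    then show "(adj (Hg G (X i)))\<^sup>*\<^sup>* x None"
    proof cases
      case 2
      obtain p where p: "p \<in> ends G e" using loopless[OF eG] by fastforce
      have pV: "p \<in> verts G" using endsV[OF eG] p by auto
      have "(adj G)\<^sup>*\<^sup>* u p" using tc pV 2 X_V[OF assms] unfolding two_connected_def connected_def by auto
      then show ?thesis using Hg_reach_None[OF assms 2(2), of G p] X_e[OF assms, of p] p 2(1)
        by auto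
    qed simp
  qed
qed

lemma Hg_del_None:
  assumes "i \<in> {1..s}"
  shows "connected (del_vert (Hg G (X i)) None)"
proof -
  obtain a where a: "a \<in> X i" using X_ne[OF assms] by blast
  let ?H = "del_vert (Hg G (X i)) None"
  have m: "(adj ?H)\<^sup>*\<^sup>* (Some u) (Some y)" if r: "(adj (induced G (X i)))\<^sup>*\<^sup>* u y" for u y
    using r
  proof (induction rule: rtranclp_induct)
    case base then show ?case by simp
  next
    case (step y z)
    then obtain l where l: "l \<in> edges G" "ends G l \<subseteq> X i" "y \<in> ends G l" "z \<in> ends G l"
      unfolding adj_def induced_def by auto
    have "l \<in> edges ?H" using l by (auto simp: del_vert_eq Hg_simps)
    moreover have "Some y \<in> ends ?H l" "Some z \<in> ends ?H l" using l by (auto simp: del_vert_eq Hg_simps)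
    ultimately have "adj ?H (Some y) (Some z)" unfolding adj_def by blast
    then show ?case using step(3) by (meson rtranclp.rtrancl_into_rtrancl)
  qed
  show ?thesis
  proof (rule connected_hub[of "Some a"])
    show "Some a \<in> verts ?H" using a by (simp add: del_vert_eq Hg_simps)
    show "\<forall>u\<in>verts ?H. (adj ?H)\<^sup>*\<^sup>* u (Some a)"
    proof
      fix x assume "x \<in> verts ?H"
      then obtain u where u: "x = Some u" "u \<in> X i" by (auto simp: del_vert_eq Hg_simps)
      have "(adj (induced G (X i)))\<^sup>*\<^sup>* u a" using Xconn assms u a
        unfolding connected_def induced_def by auto
      then show "(adj ?H)\<^sup>*\<^sup>* x (Some a)" using m u by auto
    qed
  qed
qed

lemma Hg_del_Some:
  assumes "i \<in> {1..s}" "a \<in> X i"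
  shows "connected (del_vert (Hg G (X i)) (Some a))"
proof -
  let ?H = "del_vert (Hg G (X i)) (Some a)"
  have aV: "a \<in> verts G" using X_V[OF assms(1)] assms(2) by auto
  have con: "connected (del_vert G a)" using tc aV unfolding two_connected_def by auto
  obtain p where p: "p \<in> ends G e" using loopless[OF eG] by fastforce
  have pV: "p \<in> verts G" using endsV[OF eG] p by auto
  have pa: "p \<noteq> a" using X_e[OF assms(1), of p] p assms(2) by auto
  show ?thesis
  proof (rule connected_hub[of None])
    show "None \<in> verts ?H" by (simp add: del_vert_eq Hg_simps)
    show "\<forall>u\<in>verts ?H. (adj ?H)\<^sup>*\<^sup>* u None"
    proof
      fix x assume "x \<in> verts ?H"
      then consider "x = None" | u where "x = Some u" "u \<in> X i" "u \<noteq> a" by (auto simp: del_vert_eq Hg_simps)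
      then show "(adj ?H)\<^sup>*\<^sup>* x None"
      proof cases
        case 2
        have "(adj (del_vert G a))\<^sup>*\<^sup>* u p" using con 2 pV pa X_V[OF assms(1)]
          unfolding connected_def del_vert_eq by auto
        moreover have "edges (del_vert G a) \<subseteq> edges G" "ends (del_vert G a) = ends G"
          by (auto simp: del_vert_eq)
        moreover have "ends ?H = ends (Hg G (X i))" by (simp add: del_vert_eq)
        moreover have "\<forall>l\<in>edges (Hg G (X i)). l \<in> edges (del_vert G a) \<longrightarrow> l \<in> edges ?H"
          using assms(2) by (auto simp: del_vert_eq Hg_Some_in)
        ultimately show ?thesis using Hg_reach_None[OF assms(1) 2(2)] X_e[OF assms(1), of p] p 2(1)
          by auto
      qed simp
    qed
  qed
qed

lemma Hg_card_verts:
  assumes "i \<in> {1..s}"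
  shows "card (verts (Hg G (X i))) = card (X i) + 1"
proof -
  have "card (Some ` X i \<union> {None}) = card (Some ` X i) + 1"
    using X_fin[OF assms] by (simp add: card_insert_if)
  also have "card (Some ` X i) = card (X i)" by (simp add: card_image)
  finally show ?thesis by (simp add: Hg_simps)
qed

lemma Hg_two_connected:
  assumes "i \<in> {1..s}"
  shows "two_connected (Hg G (X i))"
  unfolding two_connected_def
proof (intro conjI ballI)
  show "wf_mgraph (Hg G (X i))" using Hg_wf[OF assms] .
  have "card (X i) \<ge> 2" using Xcard assms by auto
  then show "2 < card (verts (Hg G (X i)))" using Hg_card_verts[OF assms] by auto
  show "connected (Hg G (X i))" using Hg_connected[OF assms] .
next
  fix v assume "v \<in> verts (Hg G (X i))"
  then consider "v = None" | a where "v = Some a" "a \<in> X i" by (auto simp: Hg_simps)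
  then show "connected (del_vert (Hg G (X i)) v)"
    using Hg_del_None[OF assms] Hg_del_Some[OF assms] by cases auto
qed

lemma Hg_no_cut:
  assumes "i \<in> {1..s}"
  shows "\<not> two_edge_cut (Hg G (X i)) F"
proof
  assume "two_edge_cut (Hg G (X i)) F"
  then have F: "F \<subseteq> edges (Hg G (X i))" "card F = 2" "\<not> connected (del_edges (Hg G (X i)) F)"
    unfolding two_edge_cut_def by auto
  have FG: "F \<subseteq> edges G" using F(1) by (auto simp: Hg_simps)
  let ?H = "del_edges (Hg G (X i)) F"
  have "connected ?H"
  proof (rule connected_hub[of None])
    show "None \<in> verts ?H" by (simp add: del_edges_eq Hg_simps)
    show "\<forall>u\<in>verts ?H. (adj ?H)\<^sup>*\<^sup>* u None"
    proof
      fix x assume "x \<in> verts ?H"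
      then consider "x = None" | u where "x = Some u" "u \<in> X i" by (auto simp: del_edges_eq Hg_simps)
      then show "(adj ?H)\<^sup>*\<^sup>* x None"
      proof cases
        case 2
        obtain p where p: "p \<in> ends G e \<union> ends G f" "(adj (del_edges G F))\<^sup>*\<^sup>* u p"
          using escape[OF FG F(2)] 2 X_V[OF assms] by blast
        moreover have "edges (del_edges G F) \<subseteq> edges G" "ends (del_edges G F) = ends G"
          by (auto simp: del_edges_eq)
        moreover have "ends ?H = ends (Hg G (X i))" by (simp add: del_edges_eq)
        moreover have "\<forall>l\<in>edges (Hg G (X i)). l \<in> edges (del_edges G F) \<longrightarrow> l \<in> edges ?H"
          by (auto simp: del_edges_eq)
        ultimately show ?thesis using Hg_reach_None[OF assms 2(2)] X_e[OF assms] 2(1)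
          by auto
      qed simp
    qed
  qed
  then show False using F(3) by simp
qed

lemma X_small:
  assumes "i \<in> {1..s}"
  shows "card (X i) + 1 < n"
proof -
  have "X i \<subseteq> verts G - ends G e" using Xsub assms by auto
  then have "card (X i) \<le> card (verts G - ends G e)" using finV by (simp add: card_mono)
  also have "\<dots> = n - 2" using cardG loopless[OF eG] endsV[OF eG] finV
    by (simp add: card_Diff_subset finite_subset)
  finally show ?thesis using n4 by linarith
qed

end


context setting begin

lemma sum_option:
  fixes w :: "'v \<Rightarrow> nat"
  assumes "finite D"
  shows "sum (\<lambda>x. case x of None \<Rightarrow> 0 | Some y \<Rightarrow> w y) D = sum w {x. Some x \<in> D}"
proof -
  let ?w' = "\<lambda>x. case x of None \<Rightarrow> 0 | Some y \<Rightarrow> w y"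
  have "sum ?w' (Some ` {x. Some x \<in> D}) = sum ?w' D"
    by (rule sum.mono_neutral_cong_left) (use assms in \<open>auto split: option.splits\<close>)
  moreover have "sum ?w' (Some ` {x. Some x \<in> D}) = sum w {x. Some x \<in> D}"
    by (subst sum.reindex) (auto simp: inj_on_def)
  ultimately show ?thesis by simp
qed

lemma Hg_cycle:
  fixes w :: "'v \<Rightarrow> nat"
  assumes i: "i \<in> {1..s}"
    and a: "a \<in> edges (Hg G (X i))" "None \<in> ends (Hg G (X i)) a"
    and b: "b \<in> edges (Hg G (X i))" "None \<in> ends (Hg G (X i)) b" and ab: "a \<noteq> b"
  shows "\<exists>DV DE. is_cycle (Hg G (X i)) DV DE \<and> a \<in> DE \<and> b \<in> DE \<and>
     real (sum w {x. Some x \<in> DV}) \<ge> real (sum w (X i)) powr r_exp"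
proof -
  let ?H = "Hg G (X i)"
  have wf: "wf_mgraph ?H" using Hg_wf[OF i] .
  obtain H' :: "(nat, nat) mgraph" and \<phi> \<psi> where iso: "iso ?H H' \<phi> \<psi>"
    using nat_copy[of ?H] wf unfolding wf_mgraph_def by blast
  have b1: "bij_betw \<phi> (verts ?H) (verts H')" and b2: "bij_betw \<psi> (edges ?H) (edges H')"
    using iso unfolding iso_def by auto
  define w' :: "'v option \<Rightarrow> nat" where "w' x = (case x of None \<Rightarrow> 0 | Some y \<Rightarrow> w y)" for x
  define wH where "wH k = w' (inv_into (verts ?H) \<phi> k)" for k
  have finH: "finite (verts ?H)" using wf unfolding wf_mgraph_def by auto
  have sumeq: "sum wH (\<phi> ` D) = sum w {x. Some x \<in> D}" if D: "D \<subseteq> verts ?H" for D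
  proof -
    have inj: "inj_on \<phi> D" using bij_facts(3)[OF b1] D inj_on_subset by blast
    have "sum wH (\<phi> ` D) = sum (wH \<circ> \<phi>) D" using sum.reindex[OF inj] by simp
    also have "\<dots> = sum w' D"
      using D bij_facts(3)[OF b1] by (intro sum.cong) (auto simp: wH_def inv_into_f_f)
    also have "\<dots> = sum w {x. Some x \<in> D}" unfolding w'_def
      using sum_option finH D finite_subset by blast
    finally show ?thesis .
  qed
  have "\<forall>(H :: (nat, nat) mgraph) (wH :: nat \<Rightarrow> nat) e' f'.
       card (verts H) < n \<and> two_connected H \<and> cubic H \<and>
       e' \<in> edges H \<and> f' \<in> edges H \<and>
       (\<forall>F. two_edge_cut H F \<longrightarrow> separates H F e' f') \<longrightarrow>
       (\<exists>DV DE. is_cycle H DV DE \<and> e' \<in> DE \<and> f' \<in> DE \<and>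
          (if edges_adjacent H e' f'
           then real (sum wH DV) \<ge> real (sum wH (verts H)) powr r_exp
           else real (sum wH DV) \<ge> c_const * real (sum wH (verts H)) powr r_exp))"
    using star unfolding star_property_def by blast
  note st = spec[OF spec[OF spec[OF spec[OF this, of H'], of wH], of "\<psi> a"], of "\<psi> b"]
  have p1: "card (verts H') < n" using bij_betw_same_card[OF b1] Hg_card_verts[OF i] X_small[OF i] by simp
  have p2: "two_connected H'" using iso_two_connected[OF iso Hg_two_connected[OF i]] .
  have p3: "cubic H'" using iso_cubic[OF iso Hg_cubic[OF i]] .
  have p4: "\<psi> a \<in> edges H'" "\<psi> b \<in> edges H'" using bij_facts(1)[OF b2] a b by auto
  have p5: "\<forall>F. two_edge_cut H' F \<longrightarrow> separates H' F (\<psi> a) (\<psi> b)"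
  proof (intro allI impI)
    fix F assume "two_edge_cut H' F"
    then have "two_edge_cut ?H (inv_into (edges ?H) \<psi> ` F)" using iso_two_edge_cut[OF iso_sym[OF iso]] by blast
    then show "separates H' F (\<psi> a) (\<psi> b)" using Hg_no_cut[OF i] by blast
  qed
  have adjab: "edges_adjacent ?H a b" using ab a b unfolding edges_adjacent_def by auto
  have p6: "edges_adjacent H' (\<psi> a) (\<psi> b)" using iso_edges_adjacent[OF iso adjab a(1) b(1)] .
  obtain DV DE where D: "is_cycle H' DV DE" "\<psi> a \<in> DE" "\<psi> b \<in> DE"
    "real (sum wH DV) \<ge> real (sum wH (verts H')) powr r_exp"
    using st p1 p2 p3 p4 p5 p6 by auto
  let ?\<phi>' = "inv_into (verts ?H) \<phi>" and ?\<psi>' = "inv_into (edges ?H) \<psi>"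
  have cyc: "is_cycle ?H (?\<phi>' ` DV) (?\<psi>' ` DE)" using iso_is_cycle[OF iso_sym[OF iso] D(1)] .
  have "a = ?\<psi>' (\<psi> a)" "b = ?\<psi>' (\<psi> b)" using bij_facts(3)[OF b2] a b by (auto simp: inv_into_f_f)
  then have abD: "a \<in> ?\<psi>' ` DE" "b \<in> ?\<psi>' ` DE" using D by auto
  have DVs: "DV \<subseteq> verts H'" using D(1) unfolding is_cycle_def by auto
  have DD: "?\<phi>' ` DV \<subseteq> verts ?H"
  proof
    fix y assume "y \<in> ?\<phi>' ` DV"
    then obtain x where x: "x \<in> DV" "y = ?\<phi>' x" by auto
    have "x \<in> \<phi> ` verts ?H" using x DVs bij_facts(4)[OF b1] by auto
    then show "y \<in> verts ?H" using x(2) by (metis inv_into_into)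
  qed
  have "\<phi> ` (?\<phi>' ` DV) = DV"
  proof -
    have "\<forall>x\<in>DV. \<phi> (?\<phi>' x) = x"
    proof
      fix x assume "x \<in> DV"
      then have "x \<in> \<phi> ` verts ?H" using DVs bij_facts(4)[OF b1] by auto
      then show "\<phi> (?\<phi>' x) = x" by (metis f_inv_into_f)
    qed
    then show ?thesis by (simp add: image_image)
  qed
  then have s1: "sum wH DV = sum w {x. Some x \<in> ?\<phi>' ` DV}" using sumeq[OF DD] by simp
  have "sum wH (verts H') = sum w {x. Some x \<in> verts ?H}" using sumeq[of "verts ?H"] bij_facts(4)[OF b1] by simp
  also have "{x. Some x \<in> verts ?H} = X i" by (auto simp: Hg_simps)
  finally have s2: "sum wH (verts H') = sum w (X i)" .
  show ?thesis using cyc abD D(4) s1 s2 by auto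
qed

end




definition PV :: "('e \<Rightarrow> 'w set) \<Rightarrow> 'e set \<Rightarrow> 'w set" where
  "PV \<beta> M = \<Union> (\<beta> ` M)"

definition dg :: "('e \<Rightarrow> 'w set) \<Rightarrow> 'e set \<Rightarrow> 'w \<Rightarrow> nat" where
  "dg \<beta> M v = card {l\<in>M. v \<in> \<beta> l}"

definition pathlike :: "('e \<Rightarrow> 'w set) \<Rightarrow> 'e set \<Rightarrow> 'w set \<Rightarrow> bool" where
  "pathlike \<beta> M T \<longleftrightarrow> M \<noteq> {} \<and> finite M \<and> (card T = 1 \<or> card T = 2) \<and> T \<subseteq> PV \<beta> M \<and>
     connected \<lparr>verts = PV \<beta> M, edges = M, ends = \<beta>\<rparr> \<and>
     (\<forall>v\<in>PV \<beta> M. dg \<beta> M v = (if v \<in> T then (if card T = 2 then 1 else 2) else 2))"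

definition pinv :: "('e \<Rightarrow> 'w set) \<Rightarrow> 'e set \<Rightarrow> ('w, 'e set) mgraph \<Rightarrow> bool" where
  "pinv \<beta> E H \<longleftrightarrow> finite (edges H) \<and>
     (\<forall>M\<in>edges H. M \<subseteq> E \<and> ends H M \<subseteq> verts H \<and> pathlike \<beta> M (ends H M) \<and>
        (PV \<beta> M - ends H M) \<inter> verts H = {}) \<and>
     (\<forall>M\<in>edges H. \<forall>M'\<in>edges H. M \<noteq> M' \<longrightarrow> M \<inter> M' = {} \<and> (PV \<beta> M - ends H M) \<inter> PV \<beta> M' = {})"

lemma dg_zero: "v \<notin> PV \<beta> M \<Longrightarrow> dg \<beta> M v = 0"
proof -
  assume "v \<notin> PV \<beta> M"
  then have "{l\<in>M. v \<in> \<beta> l} = {}" unfolding PV_def by auto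
  then show ?thesis unfolding dg_def by (metis card.empty)
qed

lemma dg_union: "finite A \<Longrightarrow> finite B \<Longrightarrow> A \<inter> B = {} \<Longrightarrow> dg \<beta> (A \<union> B) v = dg \<beta> A v + dg \<beta> B v"
proof -
  assume fin: "finite A" "finite B" and d: "A \<inter> B = {}"
  have "{l\<in>A \<union> B. v \<in> \<beta> l} = {l\<in>A. v \<in> \<beta> l} \<union> {l\<in>B. v \<in> \<beta> l}" by auto
  moreover have "card ({l\<in>A. v \<in> \<beta> l} \<union> {l\<in>B. v \<in> \<beta> l}) = card {l\<in>A. v \<in> \<beta> l} + card {l\<in>B. v \<in> \<beta> l}"
    by (rule card_Un_disjoint) (use fin d in auto)
  ultimately show ?thesis unfolding dg_def by simp
qed

lemma PV_union: "PV \<beta> (A \<union> B) = PV \<beta> A \<union> PV \<beta> B"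
  unfolding PV_def by auto

lemma union_connected:
  assumes "connected \<lparr>verts = A, edges = E, ends = \<beta>\<rparr>" "connected \<lparr>verts = B, edges = F, ends = \<beta>\<rparr>"
    "x \<in> A" "x \<in> B"
  shows "connected \<lparr>verts = A \<union> B, edges = E \<union> F, ends = \<beta>\<rparr>"
proof (rule connected_hub[of x])
  let ?U = "\<lparr>verts = A \<union> B, edges = E \<union> F, ends = \<beta>\<rparr>"
  show "x \<in> verts ?U" using assms by simp
  show "\<forall>u\<in>verts ?U. (adj ?U)\<^sup>*\<^sup>* u x"
  proof
    fix u assume "u \<in> verts ?U"
    then consider "u \<in> A" | "u \<in> B" by auto
    then show "(adj ?U)\<^sup>*\<^sup>* u x"
    proof cases
      case 1
      then have "(adj \<lparr>verts = A, edges = E, ends = \<beta>\<rparr>)\<^sup>*\<^sup>* u x" using assms unfolding connected_def by auto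
      then show ?thesis by (rule reach_mono) auto
    next
      case 2
      then have "(adj \<lparr>verts = B, edges = F, ends = \<beta>\<rparr>)\<^sup>*\<^sup>* u x" using assms unfolding connected_def by auto
      then show ?thesis by (rule reach_mono) auto
    qed
  qed
qed

lemma inv_del_edges:
  assumes "pinv \<beta> E H"
  shows "pinv \<beta> E (del_edges H F)"
  using assms unfolding pinv_def del_edges_eq by auto

lemma suppress_cases:
  "suppress H x = H \<or>
   (\<exists>L1 L2. x \<in> verts H \<and> L1 \<noteq> L2 \<and> {l\<in>edges H. x \<in> ends H l} = {L1, L2} \<and>
      card (ends H L1) = 2 \<and> card (ends H L2) = 2 \<and>
      suppress H x = \<lparr>verts = verts H - {x}, edges = (edges H - {L1, L2}) \<union> {L1 \<union> L2},
         ends = (ends H)(L1 \<union> L2 := (ends H L1 \<union> ends H L2) - {x})\<rparr>)"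
proof (cases "x \<in> verts H \<and> (\<exists>L1 L2. L1 \<noteq> L2 \<and> {l\<in>edges H. x \<in> ends H l} = {L1, L2}
          \<and> card (ends H L1) = 2 \<and> card (ends H L2) = 2)")
  case True
  then obtain L1 L2 where L: "L1 \<noteq> L2" "{l\<in>edges H. x \<in> ends H l} = {L1, L2}"
    "card (ends H L1) = 2" "card (ends H L2) = 2" by (elim conjE exE) (intro that)
  define Q where "Q = (\<lambda>(L1, L2). L1 \<noteq> L2 \<and> {l\<in>edges H. x \<in> ends H l} = {L1, L2})"
  have ex: "\<exists>p. Q p"
    by (rule exI[of _ "(L1, L2)"]) (use L in \<open>simp add: Q_def\<close>)
  define p where "p = (SOME p. Q p)"
  have Qp: "Q p" unfolding p_def by (rule someI_ex[OF ex])
  obtain P1 P2 where P: "p = (P1, P2)" by (cases p) simp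
  have "Q (P1, P2)" using Qp P by simp
  then have "P1 \<noteq> P2 \<and> {l\<in>edges H. x \<in> ends H l} = {P1, P2}" unfolding Q_def by simp
  then have Pp: "P1 \<noteq> P2" "{l\<in>edges H. x \<in> ends H l} = {P1, P2}" by auto
  then have "{P1, P2} = {L1, L2}" using L(2) by simp
  then have "card (ends H P1) = 2" "card (ends H P2) = 2" using L(3,4) by (auto simp: doubleton_eq_iff)
  moreover have "suppress H x = \<lparr>verts = verts H - {x}, edges = (edges H - {P1, P2}) \<union> {P1 \<union> P2},
         ends = (ends H)(P1 \<union> P2 := (ends H P1 \<union> ends H P2) - {x})\<rparr>"
  proof -
    have "(SOME (L1, L2). L1 \<noteq> L2 \<and> {l\<in>edges H. x \<in> ends H l} = {L1, L2}) = (P1, P2)"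
      using P unfolding p_def Q_def by simp
    then show ?thesis unfolding suppress_def Let_def if_P[OF True] by simp
  qed
  ultimately have "x \<in> verts H \<and> P1 \<noteq> P2 \<and> {l\<in>edges H. x \<in> ends H l} = {P1, P2} \<and>
      card (ends H P1) = 2 \<and> card (ends H P2) = 2 \<and>
      suppress H x = \<lparr>verts = verts H - {x}, edges = (edges H - {P1, P2}) \<union> {P1 \<union> P2},
         ends = (ends H)(P1 \<union> P2 := (ends H P1 \<union> ends H P2) - {x})\<rparr>" using True Pp by simp
  then show ?thesis by (intro disjI2 exI[of _ P1] exI[of _ P2])
next
  case False
  then show ?thesis unfolding suppress_def if_not_P[OF False] by simp
qed

lemma inv_suppress:
  assumes I: "pinv \<beta> E H"
  shows "pinv \<beta> E (suppress H x)"
proof -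
  consider "suppress H x = H" |
    L1 L2 where "x \<in> verts H" "L1 \<noteq> L2" "{l\<in>edges H. x \<in> ends H l} = {L1, L2}"
      "card (ends H L1) = 2" "card (ends H L2) = 2"
      "suppress H x = \<lparr>verts = verts H - {x}, edges = (edges H - {L1, L2}) \<union> {L1 \<union> L2},
         ends = (ends H)(L1 \<union> L2 := (ends H L1 \<union> ends H L2) - {x})\<rparr>"
    using suppress_cases[of H x] by blast
  then show ?thesis
  proof cases
    case 1 then show ?thesis using I by simp
  next
    case 2
    note L = 2
    define H' where "H' = \<lparr>verts = verts H - {x}, edges = (edges H - {L1, L2}) \<union> {L1 \<union> L2},
         ends = (ends H)(L1 \<union> L2 := (ends H L1 \<union> ends H L2) - {x})\<rparr>"
    have L1e: "L1 \<in> edges H" "x \<in> ends H L1" and L2e: "L2 \<in> edges H" "x \<in> ends H L2"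
      using L(3) by blast+
    have finE: "finite (edges H)" using I unfolding pinv_def by auto
    have IM: "\<And>M. M \<in> edges H \<Longrightarrow> M \<subseteq> E \<and> ends H M \<subseteq> verts H \<and> pathlike \<beta> M (ends H M) \<and>
        (PV \<beta> M - ends H M) \<inter> verts H = {}" using I unfolding pinv_def by auto
    have ID: "\<And>M M'. M \<in> edges H \<Longrightarrow> M' \<in> edges H \<Longrightarrow> M \<noteq> M' \<Longrightarrow> M \<inter> M' = {} \<and> (PV \<beta> M - ends H M) \<inter> PV \<beta> M' = {}"
      using I unfolding pinv_def by auto
    have P1: "pathlike \<beta> L1 (ends H L1)" and P2: "pathlike \<beta> L2 (ends H L2)" using IM L1e L2e by auto
    obtain y1 where y1: "ends H L1 = {x, y1}" "y1 \<noteq> x" using L(4) L1e(2)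
      by (metis card2_ends insert_commute insertE singletonD)
    obtain y2 where y2: "ends H L2 = {x, y2}" "y2 \<noteq> x" using L(5) L2e(2)
      by (metis card2_ends insert_commute insertE singletonD)
    have yV: "y1 \<in> verts H" "y2 \<in> verts H" using IM[OF L1e(1)] IM[OF L2e(1)] y1 y2 by auto
    have dis: "L1 \<inter> L2 = {}" using ID L1e L2e L(2) by auto
    have ne: "L1 \<noteq> {}" "L2 \<noteq> {}" "finite L1" "finite L2" using P1 P2 unfolding pathlike_def by auto
    have old: "M \<noteq> L1 \<union> L2" "x \<notin> ends H M" if "M \<in> edges H - {L1, L2}" for M
    proof -
      have "M \<inter> L1 = {}" using ID that L1e by auto
      then show "M \<noteq> L1 \<union> L2" using ne by auto
      show "x \<notin> ends H M" using L(3) that by auto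
    qed
    have Nends: "(ends H L1 \<union> ends H L2) - {x} = {y1, y2}" using y1 y2 by auto
    have PV1: "ends H L1 \<subseteq> PV \<beta> L1" and PV2: "ends H L2 \<subseteq> PV \<beta> L2"
      using P1 P2 unfolding pathlike_def by auto
    have i15: "(PV \<beta> L1 - ends H L1) \<inter> verts H = {}" "(PV \<beta> L2 - ends H L2) \<inter> verts H = {}"
      using IM L1e L2e by auto
    have i16: "(PV \<beta> L1 - ends H L1) \<inter> PV \<beta> L2 = {}" "(PV \<beta> L2 - ends H L2) \<inter> PV \<beta> L1 = {}"
      using ID L1e L2e L(2) by auto
    have y1PV2: "y1 \<in> PV \<beta> L2 \<Longrightarrow> y1 = y2" using i15(2) yV y1 y2 by auto
    have y2PV1: "y2 \<in> PV \<beta> L1 \<Longrightarrow> y1 = y2" using i15(1) yV y1 y2 by auto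
    have both: "v \<in> PV \<beta> L1 \<Longrightarrow> v \<in> PV \<beta> L2 \<Longrightarrow> v = x \<or> (v = y1 \<and> v = y2)" for v
      using i16 y1 y2 by auto
    have dg1: "v \<in> PV \<beta> L1 \<Longrightarrow> dg \<beta> L1 v = (if v = x \<or> v = y1 then 1 else 2)" for v
      using P1 L(4) y1 unfolding pathlike_def by auto
    have dg2: "v \<in> PV \<beta> L2 \<Longrightarrow> dg \<beta> L2 v = (if v = x \<or> v = y2 then 1 else 2)" for v
      using P2 L(5) y2 unfolding pathlike_def by auto
    have pm: "pathlike \<beta> (L1 \<union> L2) {y1, y2}"
      unfolding pathlike_def
    proof (intro conjI)
      show "L1 \<union> L2 \<noteq> {}" "finite (L1 \<union> L2)" using ne by auto
      show "card {y1, y2} = 1 \<or> card {y1, y2} = 2" by (cases "y1 = y2") auto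
      show "{y1, y2} \<subseteq> PV \<beta> (L1 \<union> L2)" using PV1 PV2 y1 y2 by (auto simp: PV_union)
      have "connected \<lparr>verts = PV \<beta> L1 \<union> PV \<beta> L2, edges = L1 \<union> L2, ends = \<beta>\<rparr>"
        by (rule union_connected) (use P1 P2 PV1 PV2 y1 y2 in \<open>auto simp: pathlike_def\<close>)
      then show "connected \<lparr>verts = PV \<beta> (L1 \<union> L2), edges = L1 \<union> L2, ends = \<beta>\<rparr>"
        by (simp add: PV_union)
      show "\<forall>v\<in>PV \<beta> (L1 \<union> L2). dg \<beta> (L1 \<union> L2) v =
          (if v \<in> {y1, y2} then if card {y1, y2} = 2 then 1 else 2 else 2)"
      proof
        fix v assume v: "v \<in> PV \<beta> (L1 \<union> L2)"
        have du: "dg \<beta> (L1 \<union> L2) v = dg \<beta> L1 v + dg \<beta> L2 v" by (rule dg_union) (use ne dis in auto)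
        have z1: "v \<notin> PV \<beta> L1 \<Longrightarrow> dg \<beta> L1 v = 0" and z2: "v \<notin> PV \<beta> L2 \<Longrightarrow> dg \<beta> L2 v = 0"
          by (rule dg_zero, assumption)+
        have xin: "x \<in> PV \<beta> L1" "x \<in> PV \<beta> L2" "y1 \<in> PV \<beta> L1" "y2 \<in> PV \<beta> L2" using PV1 PV2 y1 y2 by auto
        consider (a) "v = x" | (b) "v \<noteq> x" "v \<in> PV \<beta> L1" "v \<in> PV \<beta> L2"
          | (c) "v \<noteq> x" "v \<in> PV \<beta> L1" "v \<notin> PV \<beta> L2" | (d) "v \<noteq> x" "v \<notin> PV \<beta> L1" "v \<in> PV \<beta> L2"
          using v by (auto simp: PV_union)
        then show "dg \<beta> (L1 \<union> L2) v = (if v \<in> {y1, y2} then if card {y1, y2} = 2 then 1 else 2 else 2)"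
        proof cases
          case a then show ?thesis using du dg1 dg2 xin y1 y2 by auto
        next
          case b
          then have "v = y1" "v = y2" using both by auto
          then show ?thesis using du dg1 dg2 b by auto
        next
          case c
          have "v \<noteq> y2" using c y2PV1 xin by auto
          then show ?thesis using du dg1 z2 c by (cases "v = y1") (auto simp: card_insert_if)
        next
          case d
          have "v \<noteq> y1" using d y1PV2 xin by auto
          then show ?thesis using du z1 dg2 d by (cases "v = y2") (auto simp: card_insert_if)
        qed
      qed
    qed
    have inv': "pinv \<beta> E H'"
    proof -
    have a1: "finite (edges H')" using finE unfolding H'_def by simp
    have a2: "\<forall>M\<in>edges H'. M \<subseteq> E \<and> ends H' M \<subseteq> verts H' \<and> pathlike \<beta> M (ends H' M) \<and>
          (PV \<beta> M - ends H' M) \<inter> verts H' = {}"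
    proof
      fix M assume M: "M \<in> edges H'"
      then consider (new) "M = L1 \<union> L2" | (o) "M \<in> edges H - {L1, L2}" unfolding H'_def by auto
      then show "M \<subseteq> E \<and> ends H' M \<subseteq> verts H' \<and> pathlike \<beta> M (ends H' M) \<and>
          (PV \<beta> M - ends H' M) \<inter> verts H' = {}"
      proof cases
        case new
        have e: "ends H' M = {y1, y2}" using new Nends unfolding H'_def by simp
        have "M \<subseteq> E" using IM L1e L2e new by auto
        moreover have "ends H' M \<subseteq> verts H'" using e yV y1 y2 unfolding H'_def by auto
        moreover have "(PV \<beta> M - ends H' M) \<inter> verts H' = {}"
        proof -
          have "v \<notin> verts H'" if "v \<in> PV \<beta> M" "v \<notin> {y1, y2}" for v
          proof
            assume vv: "v \<in> verts H'"
            then have "v \<in> verts H" "v \<noteq> x" unfolding H'_def by auto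
            then show False using that i15 y1 y2 new by (auto simp: PV_union)
          qed
          then show ?thesis using e by auto
        qed
        ultimately show ?thesis using pm e new by simp
      next
        case o
        have e: "ends H' M = ends H M" using old[OF o] unfolding H'_def by simp
        show ?thesis using IM[of M] o old[OF o] e unfolding H'_def by auto
      qed
    qed
    have a3: "\<forall>M\<in>edges H'. \<forall>M'\<in>edges H'. M \<noteq> M' \<longrightarrow> M \<inter> M' = {} \<and> (PV \<beta> M - ends H' M) \<inter> PV \<beta> M' = {}"
    proof (intro ballI impI)
      fix M M' assume M: "M \<in> edges H'" "M' \<in> edges H'" "M \<noteq> M'"
      have oldPV: "(PV \<beta> M - ends H M) \<inter> PV \<beta> (L1 \<union> L2) = {} \<and> M \<inter> (L1 \<union> L2) = {}"
        if "M \<in> edges H - {L1, L2}" for M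
        using ID[of M L1] ID[of M L2] that L1e L2e by (auto simp: PV_union)
      have newPV: "(PV \<beta> (L1 \<union> L2) - {y1, y2}) \<inter> PV \<beta> M = {}" if o: "M \<in> edges H - {L1, L2}" for M
      proof -
        have "v \<notin> PV \<beta> M" if "v \<in> PV \<beta> (L1 \<union> L2)" "v \<notin> {y1, y2}" for v
        proof
          assume vM: "v \<in> PV \<beta> M"
          show False
          proof (cases "v = x")
            case True
            have "x \<in> verts H" using L(1) .
            then have "x \<in> ends H M" using IM[of M] o vM True by auto
            then show False using old[OF o] by simp
          next
            case False
            then have "v \<in> PV \<beta> L1 - ends H L1 \<or> v \<in> PV \<beta> L2 - ends H L2"
              using that y1 y2 by (auto simp: PV_union)
            then show False using ID[of L1 M] ID[of L2 M] o L1e L2e vM by auto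
          qed
        qed
        then show ?thesis by auto
      qed
      consider (nn) "M = L1 \<union> L2" "M' = L1 \<union> L2" | (no) "M = L1 \<union> L2" "M' \<in> edges H - {L1, L2}"
        | (on) "M \<in> edges H - {L1, L2}" "M' = L1 \<union> L2" | (oo) "M \<in> edges H - {L1, L2}" "M' \<in> edges H - {L1, L2}"
        using M unfolding H'_def by auto
      then show "M \<inter> M' = {} \<and> (PV \<beta> M - ends H' M) \<inter> PV \<beta> M' = {}"
      proof cases
        case nn then show ?thesis using M by simp
      next
        case no
        have e: "ends H' M = {y1, y2}" using no Nends unfolding H'_def by simp
        show ?thesis using oldPV[OF no(2)] newPV[OF no(2)] e no by auto
      next
        case on
        have e: "ends H' M = ends H M" using old[OF on(1)] unfolding H'_def by simp
        show ?thesis using oldPV[OF on(1)] e on by auto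
      next
        case oo
        have e: "ends H' M = ends H M" using old[OF oo(1)] unfolding H'_def by simp
        show ?thesis using ID[of M M'] oo M e by auto
      qed
    qed
    show ?thesis unfolding pinv_def using a1 a2 a3 by blast
    qed
    then show ?thesis using L(6) H'_def by simp
  qed
qed

lemma inv_ominus: "pinv \<beta> E H \<Longrightarrow> pinv \<beta> E (ominus H M)"
  unfolding ominus_def Let_def by (intro inv_suppress inv_del_edges)

lemma inv_ominus_at: "pinv \<beta> E H \<Longrightarrow> pinv \<beta> E (ominus_at H l)"
  unfolding ominus_at_def using inv_ominus by auto

lemma inv_ominus_seq: "pinv \<beta> E H \<Longrightarrow> pinv \<beta> E (ominus_seq H es)"
  unfolding ominus_seq_def
proof (induction es arbitrary: H)
  case Nil then show ?case by simp
next
  case (Cons a es)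
  have "pinv \<beta> E (ominus_at H a)" by (rule inv_ominus_at[OF Cons.prems])
  then show ?case using Cons.IH by simp
qed




context setting begin

definition \<beta> :: "'e \<Rightarrow> 'v set set" where "\<beta> l = cls s X ` ends G l"
definition E0 :: "'e set" where "E0 = {l\<in>edges G. card (\<beta> l) = 2}"

lemma inv_contract: "pinv \<beta> E0 (contract G X s)"
proof -
  let ?C = "contract G X s"
  have ed: "edges ?C = (\<lambda>l. {l}) ` E0" unfolding contract_def E0_def \<beta>_def by auto
  have en: "ends ?C {l} = \<beta> l" for l unfolding contract_def \<beta>_def by simp
  have a1: "finite (edges ?C)" using ed finE unfolding E0_def by simp
  have a2: "\<forall>M\<in>edges ?C. M \<subseteq> E0 \<and> ends ?C M \<subseteq> verts ?C \<and> pathlike \<beta> M (ends ?C M) \<and>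
        (PV \<beta> M - ends ?C M) \<inter> verts ?C = {}"
  proof
    fix M assume "M \<in> edges ?C"
    then obtain l where l: "l \<in> E0" "M = {l}" using ed by auto
    have lG: "l \<in> edges G" "card (\<beta> l) = 2" using l unfolding E0_def by auto
    have PVl: "PV \<beta> {l} = \<beta> l" unfolding PV_def by simp
    have sub: "\<beta> l \<subseteq> verts ?C" using endsV[OF lG(1)] unfolding \<beta>_def contract_def by auto
    have con: "connected \<lparr>verts = \<beta> l, edges = {l}, ends = \<beta>\<rparr>"
    proof -
      obtain u where u: "u \<in> \<beta> l" using lG(2) by fastforce
      show ?thesis
      proof (rule connected_hub[of u])
        show "u \<in> verts \<lparr>verts = \<beta> l, edges = {l}, ends = \<beta>\<rparr>" using u by simp
        show "\<forall>v\<in>verts \<lparr>verts = \<beta> l, edges = {l}, ends = \<beta>\<rparr>. (adj \<lparr>verts = \<beta> l, edges = {l}, ends = \<beta>\<rparr>)\<^sup>*\<^sup>* v u"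
        proof
          fix v assume "v \<in> verts \<lparr>verts = \<beta> l, edges = {l}, ends = \<beta>\<rparr>"
          then have "adj \<lparr>verts = \<beta> l, edges = {l}, ends = \<beta>\<rparr> v u" using u unfolding adj_def by simp
          then show "(adj \<lparr>verts = \<beta> l, edges = {l}, ends = \<beta>\<rparr>)\<^sup>*\<^sup>* v u" by simp
        qed
      qed
    qed
    have dgl: "\<forall>v\<in>\<beta> l. dg \<beta> {l} v = 1"
    proof
      fix v assume "v \<in> \<beta> l"
      then have "{l'\<in>{l}. v \<in> \<beta> l'} = {l}" by auto
      then show "dg \<beta> {l} v = 1" unfolding dg_def by simp
    qed
    have "pathlike \<beta> {l} (\<beta> l)" unfolding pathlike_def PVl using lG(2) con dgl by simp
    then show "M \<subseteq> E0 \<and> ends ?C M \<subseteq> verts ?C \<and> pathlike \<beta> M (ends ?C M) \<and>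
        (PV \<beta> M - ends ?C M) \<inter> verts ?C = {}" using l en sub PVl by simp
  qed
  have a3: "\<forall>M\<in>edges ?C. \<forall>M'\<in>edges ?C. M \<noteq> M' \<longrightarrow> M \<inter> M' = {} \<and> (PV \<beta> M - ends ?C M) \<inter> PV \<beta> M' = {}"
  proof (intro ballI impI)
    fix M M' assume M: "M \<in> edges ?C" "M' \<in> edges ?C" "M \<noteq> M'"
    then obtain l l' where "M = {l}" "M' = {l'}" using ed by auto
    then show "M \<inter> M' = {} \<and> (PV \<beta> M - ends ?C M) \<inter> PV \<beta> M' = {}" using M en unfolding PV_def by auto
  qed
  show ?thesis unfolding pinv_def using a1 a2 a3 by blast
qed

end

lemma extract_cycle:
  fixes \<beta> :: "'e \<Rightarrow> 'w set" and H :: "('w, 'e set) mgraph"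
  assumes I: "pinv \<beta> E H" and C: "is_cycle H CV CE"
  shows "finite (\<Union>CE)" "\<Union>CE \<subseteq> E" "CV \<subseteq> \<Union>(\<beta> ` \<Union>CE)"
    "\<forall>v\<in>\<Union>(\<beta> ` \<Union>CE). card {l\<in>\<Union>CE. v \<in> \<beta> l} = 2"
    "\<forall>u\<in>\<Union>(\<beta> ` \<Union>CE). \<forall>v\<in>\<Union>(\<beta> ` \<Union>CE).
        (adj \<lparr>verts = \<Union>(\<beta> ` \<Union>CE), edges = \<Union>CE, ends = \<beta>\<rparr>)\<^sup>*\<^sup>* u v"
proof -
  have finE: "finite (edges H)" using I unfolding pinv_def by auto
  have IM: "\<And>M. M \<in> edges H \<Longrightarrow> M \<subseteq> E \<and> ends H M \<subseteq> verts H \<and> pathlike \<beta> M (ends H M) \<and>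
      (PV \<beta> M - ends H M) \<inter> verts H = {}" using I unfolding pinv_def by auto
  have ID: "\<And>M M'. M \<in> edges H \<Longrightarrow> M' \<in> edges H \<Longrightarrow> M \<noteq> M' \<Longrightarrow> M \<inter> M' = {} \<and> (PV \<beta> M - ends H M) \<inter> PV \<beta> M' = {}"
    using I unfolding pinv_def by auto
  have c: "CV \<noteq> {}" "CV \<subseteq> verts H" "CE \<subseteq> edges H" "\<forall>l\<in>CE. ends H l \<subseteq> CV"
    "\<forall>v\<in>CV. deg \<lparr>verts = CV, edges = CE, ends = ends H\<rparr> v = 2"
    "connected \<lparr>verts = CV, edges = CE, ends = ends H\<rparr>"
    using C unfolding is_cycle_def by auto
  have finCE: "finite CE" using c(3) finE finite_subset by blast
  have PM: "M \<in> CE \<Longrightarrow> pathlike \<beta> M (ends H M)" for M using IM c(3) by blast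
  have finM: "M \<in> CE \<Longrightarrow> finite M" for M using PM unfolding pathlike_def by auto
  show f1: "finite (\<Union>CE)" using finCE finM by blast
  show "\<Union>CE \<subseteq> E" using IM c(3) by blast
  have V1: "\<Union>(\<beta> ` \<Union>CE) = (\<Union>M\<in>CE. PV \<beta> M)" unfolding PV_def by auto
  have endsPV: "M \<in> CE \<Longrightarrow> ends H M \<subseteq> PV \<beta> M" for M using PM unfolding pathlike_def by auto
  show cv: "CV \<subseteq> \<Union>(\<beta> ` \<Union>CE)"
  proof
    fix v assume v: "v \<in> CV"
    have "deg \<lparr>verts = CV, edges = CE, ends = ends H\<rparr> v = 2" using c(5) v by auto
    moreover have "deg \<lparr>verts = CV, edges = CE, ends = ends H\<rparr> v = 0" if n: "\<not> (\<exists>M\<in>CE. v \<in> ends H M)"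
    proof -
      have "{l\<in>CE. v \<in> ends H l \<and> card (ends H l) = 2} = {}" using n by auto
      moreover have "{l\<in>CE. ends H l = {v}} = {}" using n by auto
      ultimately show ?thesis unfolding deg_def by (simp only: select_convs card.empty)
    qed
    ultimately have "\<exists>M\<in>CE. v \<in> ends H M" by (metis zero_neq_numeral)
    then obtain M where M: "M \<in> CE" "v \<in> ends H M" by blast
    then have "v \<in> PV \<beta> M" using endsPV by blast
    then show "v \<in> \<Union>(\<beta> ` \<Union>CE)" using M(1) unfolding PV_def by blast
  qed
  show "\<forall>v\<in>\<Union>(\<beta> ` \<Union>CE). card {l\<in>\<Union>CE. v \<in> \<beta> l} = 2"
  proof
    fix v assume v: "v \<in> \<Union>(\<beta> ` \<Union>CE)"
    have "{l\<in>\<Union>CE. v \<in> \<beta> l} = (\<Union>M\<in>CE. {l\<in>M. v \<in> \<beta> l})" by auto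
    moreover have "card (\<Union>M\<in>CE. {l\<in>M. v \<in> \<beta> l}) = (\<Sum>M\<in>CE. card {l\<in>M. v \<in> \<beta> l})"
    proof (rule card_UN_disjoint)
      show "finite CE" using finCE .
      show "\<forall>M\<in>CE. finite {l\<in>M. v \<in> \<beta> l}" using finM by auto
      have dj: "\<And>M M'. M \<in> CE \<Longrightarrow> M' \<in> CE \<Longrightarrow> M \<noteq> M' \<Longrightarrow> M \<inter> M' = {}" using ID c(3) by blast
      show "\<forall>M\<in>CE. \<forall>M'\<in>CE. M \<noteq> M' \<longrightarrow> {l\<in>M. v \<in> \<beta> l} \<inter> {l\<in>M'. v \<in> \<beta> l} = {}"
        using dj by blast
    qed
    ultimately have cs: "card {l\<in>\<Union>CE. v \<in> \<beta> l} = (\<Sum>M\<in>CE. dg \<beta> M v)"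
      unfolding dg_def by simp
    show "card {l\<in>\<Union>CE. v \<in> \<beta> l} = 2"
    proof (cases "v \<in> verts H")
      case True
      obtain M0 where M0: "M0 \<in> CE" "v \<in> PV \<beta> M0" using v V1 by auto
      have "v \<in> ends H M0" using IM[of M0] M0 c(3) True by auto
      then have vCV: "v \<in> CV" using c(4) M0 by auto
      have fM: "dg \<beta> M v = (if v \<in> ends H M \<and> card (ends H M) = 2 then 1 else 0) +
                (if ends H M = {v} then 2 else 0)" if M: "M \<in> CE" for M
      proof (cases "v \<in> PV \<beta> M")
        case True
        have ve: "v \<in> ends H M" using IM[of M] M c(3) True \<open>v \<in> verts H\<close> by auto
        have ct: "card (ends H M) = 1 \<or> card (ends H M) = 2" using PM[OF M] unfolding pathlike_def by auto
        have dgM: "dg \<beta> M v = (if card (ends H M) = 2 then 1 else 2)"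
          using PM[OF M] True ve unfolding pathlike_def by auto
        show ?thesis
        proof (cases "card (ends H M) = 2")
          case True
          then have "ends H M \<noteq> {v}" by auto
          then show ?thesis using dgM True ve by simp
        next
          case False
          then have "card (ends H M) = 1" using ct by simp
          then have "ends H M = {v}" using ve by (metis card_1_singletonE singletonD)
          then show ?thesis using dgM False by simp
        qed
      next
        case False
        then have "v \<notin> ends H M" using endsPV[OF M] by auto
        then show ?thesis using dg_zero[OF False] by auto
      qed
      have "(\<Sum>M\<in>CE. dg \<beta> M v) = (\<Sum>M\<in>CE. (if v \<in> ends H M \<and> card (ends H M) = 2 then 1 else 0)) +
                (\<Sum>M\<in>CE. (if ends H M = {v} then 2 else 0))"
        using fM by (simp add: sum.distrib)
      also have "(\<Sum>M\<in>CE. (if v \<in> ends H M \<and> card (ends H M) = 2 then 1 else 0)) =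
          card {M\<in>CE. v \<in> ends H M \<and> card (ends H M) = 2}"
        using sum.inter_filter[OF finCE, of "\<lambda>_. 1::nat"] by simp
      also have "(\<Sum>M\<in>CE. (if ends H M = {v} then 2 else 0)) = 2 * card {M\<in>CE. ends H M = {v}}"
        using sum.inter_filter[OF finCE, of "\<lambda>_. 2::nat" "\<lambda>M. ends H M = {v}"] by (simp add: mult.commute)
      finally have "(\<Sum>M\<in>CE. dg \<beta> M v) = deg \<lparr>verts = CV, edges = CE, ends = ends H\<rparr> v"
        unfolding deg_def by simp
      then show ?thesis using cs c(5) vCV by simp
    next
      case False
      obtain M0 where M0: "M0 \<in> CE" "v \<in> PV \<beta> M0" using v V1 by auto
      have nend: "v \<notin> ends H M0" using IM[of M0] M0 c(3) False by auto
      have d0: "dg \<beta> M0 v = 2" using PM[OF M0(1)] M0(2) nend unfolding pathlike_def by auto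
      have dz: "dg \<beta> M v = 0" if "M \<in> CE - {M0}" for M
      proof -
        have "v \<notin> PV \<beta> M" using ID[of M0 M] M0 that c(3) nend by auto
        then show ?thesis by (rule dg_zero)
      qed
      have "(\<Sum>M\<in>CE. dg \<beta> M v) = dg \<beta> M0 v + (\<Sum>M\<in>CE - {M0}. dg \<beta> M v)"
        using finCE M0(1) by (simp add: sum.remove)
      also have "(\<Sum>M\<in>CE - {M0}. dg \<beta> M v) = 0" using dz by simp
      finally show ?thesis using cs d0 by simp
    qed
  qed
  let ?U = "\<lparr>verts = \<Union>(\<beta> ` \<Union>CE), edges = \<Union>CE, ends = \<beta>\<rparr>"
  have inM: "(adj ?U)\<^sup>*\<^sup>* a b" if M: "M \<in> CE" "a \<in> PV \<beta> M" "b \<in> PV \<beta> M" for M a b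
  proof -
    have "connected \<lparr>verts = PV \<beta> M, edges = M, ends = \<beta>\<rparr>" using PM[OF M(1)] unfolding pathlike_def by auto
    then have "(adj \<lparr>verts = PV \<beta> M, edges = M, ends = \<beta>\<rparr>)\<^sup>*\<^sup>* a b" using M unfolding connected_def by auto
    then show ?thesis by (rule reach_mono) (use M in auto)
  qed
  have cyc: "(adj ?U)\<^sup>*\<^sup>* a b" if "(adj \<lparr>verts = CV, edges = CE, ends = ends H\<rparr>)\<^sup>*\<^sup>* a b" for a b
    using that
  proof (induction rule: rtranclp_induct)
    case base then show ?case by simp
  next
    case (step y z)
    then obtain M where "M \<in> CE" "y \<in> ends H M" "z \<in> ends H M" unfolding adj_def by auto
    then have "(adj ?U)\<^sup>*\<^sup>* y z" using inM endsPV by blast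
    then show ?case using step(3) by (rule rtranclp_trans[rotated])
  qed
  obtain h where h: "h \<in> CV" using c(1) by blast
  have hub: "(adj ?U)\<^sup>*\<^sup>* u h" if u: "u \<in> \<Union>(\<beta> ` \<Union>CE)" for u
  proof -
    obtain M where M: "M \<in> CE" "u \<in> PV \<beta> M" using u V1 by auto
    obtain t where t: "t \<in> ends H M" using PM[OF M(1)] unfolding pathlike_def by fastforce
    have "(adj ?U)\<^sup>*\<^sup>* u t" using inM[OF M] t endsPV[OF M(1)] by blast
    moreover have "t \<in> CV" using t c(4) M by auto
    then have "(adj ?U)\<^sup>*\<^sup>* t h" using cyc c(6) h unfolding connected_def by auto
    ultimately show ?thesis by (rule rtranclp_trans)
  qed
  show "\<forall>u\<in>\<Union>(\<beta> ` \<Union>CE). \<forall>v\<in>\<Union>(\<beta> ` \<Union>CE). (adj ?U)\<^sup>*\<^sup>* u v"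
    using hub reach_sym reach_trans by meson
qed




lemma cyc_minus:
  fixes K :: "('a, 'b) mgraph"
  assumes fin: "finite (edges K)" and finV: "finite (verts K)" and ll: "\<forall>l\<in>edges K. card (ends K l) = 2"
    and sub: "\<forall>l\<in>edges K. ends K l \<subseteq> verts K"
    and deg2: "\<forall>v\<in>verts K. card {l\<in>edges K. v \<in> ends K l} = 2"
    and con: "connected K" and z: "z \<in> verts K"
    and a: "a \<in> edges K" "ends K a = {z, pa}" "pa \<noteq> z"
    and b: "b \<in> edges K" "ends K b = {z, pb}" "pb \<noteq> z" and ab: "a \<noteq> b"
  shows "\<forall>u\<in>verts K - {z}. (adj (del_vert K z))\<^sup>*\<^sup>* u pa"
proof -
  let ?K = "del_vert K z"
  let ?R = "(adj ?K)\<^sup>*\<^sup>*"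
  have eK: "edges ?K = {l\<in>edges K. z \<notin> ends K l}" "ends ?K = ends K" by (auto simp: del_vert_eq)
  have zed: "{l\<in>edges K. z \<in> ends K l} = {a, b}"
  proof -
    have s1: "{a, b} \<subseteq> {l\<in>edges K. z \<in> ends K l}" using a b by auto
    have "card {l\<in>edges K. z \<in> ends K l} = 2" using deg2 z by auto
    moreover have "card {a, b} = 2" using ab by simp
    ultimately show ?thesis using card_subset_eq[OF _ s1] fin by (metis (no_types, lifting) finite_subset mem_Collect_eq subsetI)
  qed
  have step1: "u = z \<or> ?R u pa \<or> ?R u pb" if u: "u \<in> verts K" for u
  proof -
    have "(adj K)\<^sup>*\<^sup>* u z" using con u z unfolding connected_def by auto
    then show ?thesis
    proof (induction rule: converse_rtranclp_induct)
      case base then show ?case by simp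
    next
      case (step u u')
      then obtain l where l: "l \<in> edges K" "u \<in> ends K l" "u' \<in> ends K l" unfolding adj_def by auto
      show ?case
      proof (cases "z \<in> ends K l")
        case True
        then have "l = a \<or> l = b" using zed l by auto
        then have "u = z \<or> u = pa \<or> u = pb" using l a b by auto
        then show ?thesis by auto
      next
        case False
        then have "adj ?K u u'" using l eK unfolding adj_def by auto
        moreover have "u' \<noteq> z" using False l by auto
        ultimately show ?thesis using step(3) by (meson converse_rtranclp_into_rtranclp)
      qed
    qed
  qed
  have Rz: "?R x y \<Longrightarrow> x \<noteq> z \<Longrightarrow> y \<noteq> z" for x y
  proof (induction rule: rtranclp_induct)
    case base then show ?case by simp
  next
    case (step y y')
    then show ?case using eK unfolding adj_def by auto
  qed
  have step2: "?R pb pa"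
  proof (rule ccontr)
    assume nr: "\<not> ?R pb pa"
    define A where "A = {u. ?R pa u}"
    have paV: "pa \<in> verts K" using sub a by auto
    have AV: "A \<subseteq> verts K"
    proof
      fix u assume "u \<in> A"
      then have "?R pa u" unfolding A_def by auto
      then show "u \<in> verts K"
      proof (induction rule: rtranclp_induct)
        case base then show ?case using paV by simp
      next
        case (step y y')
        then show ?case using eK sub unfolding adj_def by auto
      qed
    qed
    have finA: "finite A" using AV finV finite_subset by blast
    have zA: "z \<notin> A" using Rz a(3) unfolding A_def by auto
    have pbA: "pb \<notin> A" using nr reach_sym unfolding A_def by fastforce
    have paA: "pa \<in> A" unfolding A_def by simp
    have closed: "ends K l \<subseteq> A" if l: "l \<in> edges K" "z \<notin> ends K l" "p \<in> ends K l" "p \<in> A" for l p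
    proof
      fix q assume q: "q \<in> ends K l"
      have "adj ?K p q" using l q eK unfolding adj_def by auto
      then show "q \<in> A" using l(4) unfolding A_def by (auto intro: rtranclp.rtrancl_into_rtrancl)
    qed
    have cnt: "card {l\<in>edges K. u \<in> ends K l} = (\<Sum>l\<in>edges K. if u \<in> ends K l then 1 else 0)" for u
      using sum.inter_filter[OF fin, of "\<lambda>_. 1::nat" "\<lambda>l. u \<in> ends K l"] by simp
    have cnt2: "(\<Sum>u\<in>A. if u \<in> ends K l then 1 else 0) = card (A \<inter> ends K l)" for l
    proof -
      have "(\<Sum>u\<in>A. if u \<in> ends K l then 1 else 0) = card {u\<in>A. u \<in> ends K l}"
        using sum.inter_filter[OF finA, of "\<lambda>_. 1::nat" "\<lambda>u. u \<in> ends K l"] by simp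
      also have "{u\<in>A. u \<in> ends K l} = A \<inter> ends K l" by auto
      finally show ?thesis .
    qed
    have "(\<Sum>u\<in>A. card {l\<in>edges K. u \<in> ends K l}) = (\<Sum>u\<in>A. \<Sum>l\<in>edges K. if u \<in> ends K l then 1 else 0)"
      using cnt by simp
    also have "\<dots> = (\<Sum>l\<in>edges K. \<Sum>u\<in>A. if u \<in> ends K l then 1 else 0)" by (rule sum.swap)
    also have "\<dots> = (\<Sum>l\<in>edges K. card (A \<inter> ends K l))" using cnt2 by simp
    finally have dc: "(\<Sum>u\<in>A. card {l\<in>edges K. u \<in> ends K l}) = (\<Sum>l\<in>edges K. card (A \<inter> ends K l))" .
    have lhs: "(\<Sum>u\<in>A. card {l\<in>edges K. u \<in> ends K l}) = 2 * card A"
    proof -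
      have "(\<Sum>u\<in>A. card {l\<in>edges K. u \<in> ends K l}) = (\<Sum>u\<in>A. 2)" using deg2 AV by (intro sum.cong) auto
      then show ?thesis by simp
    qed
    have ta: "card (A \<inter> ends K a) = 1"
    proof -
      have "A \<inter> ends K a = {pa}" using a(2) zA paA by auto
      then show ?thesis by simp
    qed
    have tev: "even (card (A \<inter> ends K l))" if l: "l \<in> edges K - {a}" for l
    proof (cases "z \<in> ends K l")
      case True
      then have "l = b" using zed l by auto
      then have "A \<inter> ends K l = {}" using b(2) zA pbA by auto
      then show ?thesis by simp
    next
      case False
      show ?thesis
      proof (cases "A \<inter> ends K l = {}")
        case True then show ?thesis by simp
      next
        case ne: False
        then obtain p where "p \<in> ends K l" "p \<in> A" by blast
        then have "ends K l \<subseteq> A" using closed l False by auto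
        then have "A \<inter> ends K l = ends K l" by auto
        then show ?thesis using ll l by simp
      qed
    qed
    have "(\<Sum>l\<in>edges K. card (A \<inter> ends K l)) = card (A \<inter> ends K a) + (\<Sum>l\<in>edges K - {a}. card (A \<inter> ends K l))"
      using fin a(1) by (simp add: sum.remove)
    moreover have "even (\<Sum>l\<in>edges K - {a}. card (A \<inter> ends K l))" using tev by (intro dvd_sum) auto
    ultimately have "odd (\<Sum>l\<in>edges K. card (A \<inter> ends K l))" using ta by simp
    moreover have "even (\<Sum>l\<in>edges K. card (A \<inter> ends K l))" using dc lhs by (metis dvd_triv_left)
    ultimately show False by simp
  qed
  show ?thesis
  proof
    fix u assume u: "u \<in> verts K - {z}"
    then have "?R u pa \<or> ?R u pb" using step1 by auto
    then show "?R u pa" using step2 by (meson rtranclp_trans)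
  qed
qed


context setting begin

lemma V1_char:
  assumes "l \<in> edges G" "x \<in> \<beta> l"
  shows "(\<exists>i\<in>{1..s}. x = X i) \<or> (\<exists>v. x = {v} \<and> v \<in> verts G \<and> (\<forall>i\<in>{1..s}. v \<notin> X i))"
proof -
  obtain u where u: "u \<in> ends G l" "x = cls s X u" using assms unfolding \<beta>_def by auto
  have uV: "u \<in> verts G" using endsV[OF assms(1)] u by auto
  show ?thesis
  proof (cases "\<exists>i\<in>{1..s}. u \<in> X i")
    case True
    then obtain i where "i \<in> {1..s}" "u \<in> X i" by blast
    then show ?thesis using cls_in u by blast
  next
    case False
    then show ?thesis using cls_out u uV by blast
  qed
qed

lemma final:
  fixes w :: "'v \<Rightarrow> nat" and es :: "'e list" and CV' :: "'v set set" and CE' :: "'e set set" and I :: "nat set"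
  assumes C: "is_cycle (ominus_seq (contract G X s) es) CV' CE'" and I: "I \<subseteq> {1..s}"
    and bd: "\<forall>i\<in>I. boundary G (X i) \<inter> \<Union>CE' \<noteq> {}"
  shows "\<exists>CV CE. is_cycle G CV CE \<and> \<Union>CE' \<subseteq> CE \<and>
           real (sum w CV) \<ge> real (sum (cweight w X s) CV')
                              + (\<Sum>i\<in>I. real (sum w (X i)) powr r_exp)"
proof -
  have inv: "pinv \<beta> E0 (ominus_seq (contract G X s) es)" using inv_ominus_seq inv_contract by blast
  note ex = extract_cycle[OF inv C]
  define E1 where "E1 = \<Union>CE'"
  define V1 where "V1 = \<Union>(\<beta> ` E1)"
  let ?U = "\<lparr>verts = V1, edges = E1, ends = \<beta>\<rparr>"
  have E1fin: "finite E1" and E1E0: "E1 \<subseteq> E0" and CVV1: "CV' \<subseteq> V1"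
    and deg1: "\<forall>v\<in>V1. card {l\<in>E1. v \<in> \<beta> l} = 2"
    and con1: "\<forall>u\<in>V1. \<forall>v\<in>V1. (adj ?U)\<^sup>*\<^sup>* u v"
    using ex unfolding E1_def V1_def by auto
  have E1G: "E1 \<subseteq> edges G" and E1c: "\<And>l. l \<in> E1 \<Longrightarrow> card (\<beta> l) = 2"
    using E1E0 unfolding E0_def by auto
  have bV1: "\<And>l. l \<in> E1 \<Longrightarrow> \<beta> l \<subseteq> V1" unfolding V1_def by auto
  have V1fin: "finite V1" unfolding V1_def
    by (rule finite_UN_I[OF E1fin]) (metis E1c card.infinite zero_neq_numeral)
  have CVne: "CV' \<noteq> {}" using C unfolding is_cycle_def by auto
  define J where "J = {i\<in>{1..s}. X i \<in> V1}"
  define Bd where "Bd i = {l\<in>E1. X i \<in> \<beta> l}" for i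
  have J1: "J \<subseteq> {1..s}" unfolding J_def by auto
  have Bdc: "card (Bd i) = 2" if "i \<in> J" for i using deg1 that unfolding J_def Bd_def by auto
  have Bd_edge: "l \<in> edges (Hg G (X i)) \<and> None \<in> ends (Hg G (X i)) l \<and> \<not> ends G l \<subseteq> X i"
    if i: "i \<in> {1..s}" and l: "l \<in> Bd i" for i l
  proof -
    have lE: "l \<in> E1" "X i \<in> \<beta> l" using l unfolding Bd_def by auto
    have "ends G l \<inter> X i \<noteq> {} \<and> \<not> ends G l \<subseteq> X i"
      using boundary_char[OF i, of l] E1G E1c lE unfolding \<beta>_def by auto
    then show ?thesis using E1G lE by (auto simp: Hg_simps Hg_None_in)
  qed
  have toJ: "l \<in> Bd i \<and> i \<in> J" if i: "i \<in> {1..s}" and l: "l \<in> E1" and p: "p \<in> ends G l" "p \<in> X i" for i l p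
  proof -
    have "X i \<in> \<beta> l" using cls_in[OF i p(2)] p(1) unfolding \<beta>_def by force
    then show ?thesis using l bV1 i unfolding Bd_def J_def by auto
  qed
  have exD: "\<forall>i\<in>J. \<exists>DV DE. is_cycle (Hg G (X i)) DV DE \<and> Bd i \<subseteq> DE \<and>
      real (sum w {x. Some x \<in> DV}) \<ge> real (sum w (X i)) powr r_exp"
  proof
    fix i assume i: "i \<in> J"
    then have i1: "i \<in> {1..s}" using J1 by auto
    obtain a b where ab: "Bd i = {a, b}" "a \<noteq> b" using Bdc[OF i] card_2_iff by metis
    have "a \<in> Bd i" "b \<in> Bd i" using ab by auto
    then obtain DV DE where D: "is_cycle (Hg G (X i)) DV DE" "a \<in> DE" "b \<in> DE"
      "real (sum w {x. Some x \<in> DV}) \<ge> real (sum w (X i)) powr r_exp"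
      using Hg_cycle[OF i1 _ _ _ _ ab(2), of w] Bd_edge[OF i1] by blast
    then show "\<exists>DV DE. is_cycle (Hg G (X i)) DV DE \<and> Bd i \<subseteq> DE \<and>
      real (sum w {x. Some x \<in> DV}) \<ge> real (sum w (X i)) powr r_exp" using ab by auto
  qed
  then obtain DV where "\<forall>i\<in>J. \<exists>DE. is_cycle (Hg G (X i)) (DV i) DE \<and> Bd i \<subseteq> DE \<and>
      real (sum w {x. Some x \<in> DV i}) \<ge> real (sum w (X i)) powr r_exp" by metis
  then obtain DE where D: "\<forall>i\<in>J. is_cycle (Hg G (X i)) (DV i) (DE i) \<and> Bd i \<subseteq> DE i \<and>
      real (sum w {x. Some x \<in> DV i}) \<ge> real (sum w (X i)) powr r_exp" by metis
  define PVi where "PVi i = {x. Some x \<in> DV i}" for i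
  define S where "S = {v. {v} \<in> V1 \<and> (\<forall>i\<in>{1..s}. v \<notin> X i)}"
  define CV where "CV = S \<union> (\<Union>i\<in>J. PVi i)"
  define CE where "CE = E1 \<union> (\<Union>i\<in>J. DE i)"
  have cy: "is_cycle (Hg G (X i)) (DV i) (DE i)" "Bd i \<subseteq> DE i" if "i \<in> J" for i using D that by auto
  have DEH: "DE i \<subseteq> edges (Hg G (X i))" "DV i \<subseteq> verts (Hg G (X i))"
    "\<And>l. l \<in> DE i \<Longrightarrow> ends (Hg G (X i)) l \<subseteq> DV i"
    "\<And>v. v \<in> DV i \<Longrightarrow> deg \<lparr>verts = DV i, edges = DE i, ends = ends (Hg G (X i))\<rparr> v = 2"
    "connected \<lparr>verts = DV i, edges = DE i, ends = ends (Hg G (X i))\<rparr>"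
    if "i \<in> J" for i using cy(1)[OF that] unfolding is_cycle_def by auto
  have DEG: "DE i \<subseteq> edges G" if "i \<in> J" for i using DEH(1)[OF that] by (auto simp: Hg_simps)
  have finDE: "finite (DE i)" if "i \<in> J" for i using DEG[OF that] finE finite_subset by blast
  have degD: "card {l\<in>DE i. v \<in> ends (Hg G (X i)) l} = 2" if i: "i \<in> J" and v: "v \<in> DV i" for i v
  proof -
    have "deg \<lparr>verts = DV i, edges = DE i, ends = ends (Hg G (X i))\<rparr> v = card {l\<in>DE i. v \<in> ends (Hg G (X i)) l}"
      by (rule deg_loopless[of "\<lparr>verts = DV i, edges = DE i, ends = ends (Hg G (X i))\<rparr>", simplified])
         (use Hg_loopless DEH(1)[OF i] J1 i in blast)
    then show ?thesis using DEH(4)[OF i v] by simp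
  qed
  have NoneD: "{l\<in>DE i. None \<in> ends (Hg G (X i)) l} = Bd i" if i: "i \<in> J" for i
  proof -
    have i1: "i \<in> {1..s}" using i J1 by auto
    have sub: "Bd i \<subseteq> {l\<in>DE i. None \<in> ends (Hg G (X i)) l}" using cy(2)[OF i] Bd_edge[OF i1] by auto
    obtain a where "a \<in> Bd i" using Bdc[OF i] by fastforce
    then have "None \<in> DV i" using sub DEH(3)[OF i] by auto
    then have "card {l\<in>DE i. None \<in> ends (Hg G (X i)) l} = 2" using degD[OF i] by auto
    then show ?thesis using card_subset_eq[OF _ sub] Bdc[OF i] finDE[OF i] by (metis (no_types, lifting) finite_subset mem_Collect_eq subsetI)
  qed
  have outE1: "l \<in> E1" if i: "i \<in> J" and l: "l \<in> DE i" and n: "\<not> ends G l \<subseteq> X i" for i l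
  proof -
    have "None \<in> ends (Hg G (X i)) l" using n by (simp add: Hg_None_in)
    then have "l \<in> Bd i" using NoneD[OF i] l by auto
    then show ?thesis unfolding Bd_def by auto
  qed
  have PVX: "PVi i \<subseteq> X i" if "i \<in> J" for i using DEH(2)[OF that] unfolding PVi_def by (auto simp: Hg_simps)
  have ECa: "i \<in> J \<and> l \<in> DE i \<and> Some v \<in> ends (Hg G (X i)) l"
    if l: "l \<in> CE" and v: "v \<in> ends G l" and i: "i \<in> {1..s}" "v \<in> X i" for l v i
  proof -
    have "l \<in> E1 \<or> (i \<in> J \<and> l \<in> DE i)"
    proof (cases "l \<in> E1")
      case False
      then obtain j where j: "j \<in> J" "l \<in> DE j" using l unfolding CE_def by auto
      show ?thesis
      proof (cases "j = i")
        case True then show ?thesis using j by auto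
      next
        case False
        have "v \<notin> X j" using Xdisj i J1 j False by blast
        then have "l \<in> E1" using outE1[OF j] v by auto
        then show ?thesis by simp
      qed
    qed simp
    then have "i \<in> J \<and> l \<in> DE i" using toJ[OF i(1) _ v i(2)] cy(2) by blast
    then show ?thesis using v i by (simp add: Hg_Some_in)
  qed
  have ECb: "l \<in> E1 \<and> {v} \<in> \<beta> l"
    if l: "l \<in> CE" and v: "v \<in> ends G l" and nx: "\<forall>i\<in>{1..s}. v \<notin> X i" for l v
  proof -
    have "l \<in> E1"
    proof (cases "l \<in> E1")
      case False
      then obtain j where j: "j \<in> J" "l \<in> DE j" using l unfolding CE_def by auto
      have "v \<notin> X j" using nx j J1 by auto
      then show ?thesis using outE1[OF j] v by auto
    qed simp
    moreover have "{v} \<in> \<beta> l" using cls_out[OF nx] v unfolding \<beta>_def by force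
    ultimately show ?thesis by simp
  qed
  have CEG: "CE \<subseteq> edges G" using E1G DEG unfolding CE_def by auto
  have endsCV: "ends G l \<subseteq> CV" if l: "l \<in> CE" for l
  proof
    fix v assume v: "v \<in> ends G l"
    show "v \<in> CV"
    proof (cases "\<exists>i\<in>{1..s}. v \<in> X i")
      case True
      then obtain i where i: "i \<in> {1..s}" "v \<in> X i" by blast
      then have "i \<in> J" "l \<in> DE i" "Some v \<in> ends (Hg G (X i)) l" using ECa[OF l v] by auto
      then have "v \<in> PVi i" using DEH(3) unfolding PVi_def by blast
      then show ?thesis using \<open>i \<in> J\<close> unfolding CV_def by auto
    next
      case False
      then have "{v} \<in> \<beta> l" "l \<in> E1" using ECb[OF l v] by auto
      then have "{v} \<in> V1" using bV1 by auto
      then show ?thesis using False unfolding CV_def S_def by auto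
    qed
  qed
  have SV: "S \<subseteq> verts G"
  proof
    fix v assume "v \<in> S"
    then have "{v} \<in> V1" unfolding S_def by auto
    then obtain l where l: "l \<in> E1" "{v} \<in> \<beta> l" unfolding V1_def by auto
    then obtain u where "u \<in> ends G l" "{v} = cls s X u" unfolding \<beta>_def by auto
    then show "v \<in> verts G" using cls_single endsV E1G l(1) by (metis subsetD)
  qed
  have CVG: "CV \<subseteq> verts G" using SV PVX X_V J1 unfolding CV_def by blast
  have S_X: "v \<in> S \<Longrightarrow> v \<notin> X i" if "i \<in> {1..s}" for v i using that unfolding S_def by auto
  have degC: "card {l\<in>CE. v \<in> ends G l} = 2" if v: "v \<in> CV" for v
  proof (cases "v \<in> S")
    case True
    have "{l\<in>CE. v \<in> ends G l} = {l\<in>E1. {v} \<in> \<beta> l}"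
    proof
      show "{l\<in>CE. v \<in> ends G l} \<subseteq> {l\<in>E1. {v} \<in> \<beta> l}" using ECb True unfolding S_def by blast
      show "{l\<in>E1. {v} \<in> \<beta> l} \<subseteq> {l\<in>CE. v \<in> ends G l}"
      proof
        fix l assume "l \<in> {l\<in>E1. {v} \<in> \<beta> l}"
        then have l: "l \<in> E1" "{v} \<in> \<beta> l" by auto
        then obtain u where "u \<in> ends G l" "{v} = cls s X u" unfolding \<beta>_def by auto
        then have "v \<in> ends G l" using cls_single by metis
        then show "l \<in> {l\<in>CE. v \<in> ends G l}" using l unfolding CE_def by auto
      qed
    qed
    then show ?thesis using deg1 True unfolding S_def by auto
  next
    case False
    then obtain i where i: "i \<in> J" "v \<in> PVi i" using v unfolding CV_def by auto
    have i1: "i \<in> {1..s}" using i J1 by auto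
    have vX: "v \<in> X i" using PVX i by auto
    have "{l\<in>CE. v \<in> ends G l} = {l\<in>DE i. Some v \<in> ends (Hg G (X i)) l}"
    proof
      show "{l\<in>CE. v \<in> ends G l} \<subseteq> {l\<in>DE i. Some v \<in> ends (Hg G (X i)) l}" using ECa i1 vX by blast
      show "{l\<in>DE i. Some v \<in> ends (Hg G (X i)) l} \<subseteq> {l\<in>CE. v \<in> ends G l}"
        using i(1) unfolding CE_def by (auto simp: Hg_Some_in)
    qed
    then show ?thesis using degD[OF i(1)] i(2) unfolding PVi_def by auto
  qed
  let ?W = "\<lparr>verts = CV, edges = CE, ends = ends G\<rparr>"
  let ?R = "(adj ?W)\<^sup>*\<^sup>*"
  have adjW: "?R p q" if "l \<in> CE" "p \<in> ends G l" "q \<in> ends G l" for l p q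
  proof -
    have "adj ?W p q" using that unfolding adj_def by auto
    then show ?thesis by simp
  qed
  have alpha: "\<exists>p\<in>X i \<inter> CV. \<forall>u\<in>PVi i. ?R u p" if i: "i \<in> J" for i
  proof -
    have i1: "i \<in> {1..s}" using i J1 by auto
    let ?Hi = "Hg G (X i)"
    obtain a b where ab: "Bd i = {a, b}" "a \<noteq> b" using Bdc[OF i] card_2_iff by metis
    have aD: "a \<in> DE i" "b \<in> DE i" using ab cy(2)[OF i] by auto
    have ea: "\<exists>pa. ends ?Hi a = {None, Some pa} \<and> pa \<in> X i" if "a \<in> Bd i" for a
    proof -
      have a1: "a \<in> edges ?Hi" "None \<in> ends ?Hi a" using Bd_edge[OF i1 that] by auto
      have "card (ends ?Hi a) = 2" using Hg_loopless[OF i1 a1(1)] .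
      then obtain p1 p2 where pp: "ends ?Hi a = {p1, p2}" "p1 \<noteq> p2" by (rule card2_ends)
      define q where "q = (if p1 = None then p2 else p1)"
      have q: "ends ?Hi a = {None, q}" "q \<noteq> None" using pp a1(2) unfolding q_def by auto
      then obtain pa where "q = Some pa" by (cases q) auto
      moreover have "pa \<in> X i"
      proof -
        have "Some pa \<in> ends ?Hi a" using q calculation by auto
        then show ?thesis by (simp add: Hg_Some_in)
      qed
      ultimately show ?thesis using q by blast
    qed
    obtain pa where pa: "ends ?Hi a = {None, Some pa}" "pa \<in> X i" using ea ab by blast
    obtain pb where pb: "ends ?Hi b = {None, Some pb}" "pb \<in> X i" using ea ab by blast
    let ?K = "\<lparr>verts = DV i, edges = DE i, ends = ends ?Hi\<rparr>"
    have finDV: "finite (DV i)" using DEH(2)[OF i] Hg_wf[OF i1] unfolding wf_mgraph_def by (meson finite_subset)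
    have cm: "\<forall>u\<in>verts ?K - {None}. (adj (del_vert ?K None))\<^sup>*\<^sup>* u (Some pa)"
    proof (rule cyc_minus)
      show "finite (edges ?K)" using finDE[OF i] by simp
      show "finite (verts ?K)" using finDV by simp
      show "\<forall>l\<in>edges ?K. card (ends ?K l) = 2" using Hg_loopless[OF i1] DEH(1)[OF i] by auto
      show "\<forall>l\<in>edges ?K. ends ?K l \<subseteq> verts ?K" using DEH(3)[OF i] by auto
      show "\<forall>v\<in>verts ?K. card {l\<in>edges ?K. v \<in> ends ?K l} = 2" using degD[OF i] by auto
      show "connected ?K" using DEH(5)[OF i] .
      show "None \<in> verts ?K" using DEH(3)[OF i aD(1)] pa by auto
      show "a \<in> edges ?K" "ends ?K a = {None, Some pa}" "Some pa \<noteq> None" using aD pa by auto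
      show "b \<in> edges ?K" "ends ?K b = {None, Some pb}" "Some pb \<noteq> None" using aD pb by auto
      show "a \<noteq> b" using ab by simp
    qed
    have paCV: "pa \<in> CV"
    proof -
      have "Some pa \<in> DV i" using DEH(3)[OF i aD(1)] pa by auto
      then show ?thesis using i unfolding CV_def PVi_def by auto
    qed
    have lift: "\<exists>q. y = Some q \<and> ?R p0 q" if r: "(adj (del_vert ?K None))\<^sup>*\<^sup>* (Some p0) y" for p0 y
      using r
    proof (induction rule: rtranclp_induct)
      case base then show ?case by simp
    next
      case (step y y')
      then obtain q where q: "y = Some q" "?R p0 q" by blast
      obtain l where l: "l \<in> DE i" "None \<notin> ends ?Hi l" "y \<in> ends ?Hi l" "y' \<in> ends ?Hi l"
        using step(2) unfolding adj_def del_vert_eq by auto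
      obtain q' where q': "y' = Some q'" using l(2,4) by (cases y') auto
      have "q \<in> ends G l" "q' \<in> ends G l" using l(3,4) q(1) q' by (auto simp: Hg_Some_in)
      moreover have "l \<in> CE" using l(1) i unfolding CE_def by auto
      ultimately have "?R q q'" using adjW by blast
      then have "?R p0 q'" using q(2) by (rule rtranclp_trans[rotated])
      then show ?case using q' by blast
    qed
    have "\<forall>u\<in>PVi i. ?R u pa"
    proof
      fix u assume "u \<in> PVi i"
      then have "Some u \<in> verts ?K - {None}" unfolding PVi_def by auto
      then have "(adj (del_vert ?K None))\<^sup>*\<^sup>* (Some u) (Some pa)" using cm by blast
      then show "?R u pa" using lift by blast
    qed
    then show ?thesis using pa paCV by blast
  qed
  have repex: "\<forall>x\<in>V1. \<exists>r. r \<in> CV \<and> cls s X r = x \<and> (\<forall>u\<in>CV. cls s X u = x \<longrightarrow> ?R u r)"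
  proof
    fix x assume x: "x \<in> V1"
    then obtain l where l: "l \<in> E1" "x \<in> \<beta> l" unfolding V1_def by auto
    consider (a) i where "i \<in> {1..s}" "x = X i" | (b) v where "x = {v}" "v \<in> verts G" "\<forall>i\<in>{1..s}. v \<notin> X i"
      using V1_char[of l x] l E1G by blast
    then show "\<exists>r. r \<in> CV \<and> cls s X r = x \<and> (\<forall>u\<in>CV. cls s X u = x \<longrightarrow> ?R u r)"
    proof cases
      case a
      then have iJ: "i \<in> J" using x unfolding J_def by auto
      obtain p where p: "p \<in> X i" "p \<in> CV" "\<forall>u\<in>PVi i. ?R u p" using alpha[OF iJ] by blast
      have "\<forall>u\<in>CV. cls s X u = x \<longrightarrow> ?R u p"
      proof (intro ballI impI)
        fix u assume u: "u \<in> CV" "cls s X u = x"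
        then have uX: "u \<in> X i" using cls_eq_X[OF a(1)] a(2) by auto
        then have "u \<notin> S" using S_X a(1) by blast
        then obtain j where j: "j \<in> J" "u \<in> PVi j" using u unfolding CV_def by auto
        then have "u \<in> X j" using PVX by auto
        then have "j = i" using Xdisj uX a(1) j(1) J1 by blast
        then show "?R u p" using p j by auto
      qed
      then show ?thesis using p cls_in[OF a(1) p(1)] a(2) by blast
    next
      case b
      have vS: "v \<in> S" using b x unfolding S_def by auto
      then have "v \<in> CV" unfolding CV_def by auto
      moreover have "\<forall>u\<in>CV. cls s X u = x \<longrightarrow> ?R u v" using b cls_single by auto
      ultimately show ?thesis using cls_out[OF b(3)] b(1) by blast
    qed
  qed
  then obtain rep where rep: "\<forall>x\<in>V1. rep x \<in> CV \<and> cls s X (rep x) = x \<and> (\<forall>u\<in>CV. cls s X u = x \<longrightarrow> ?R u (rep x))"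
    by metis
  have clsV1: "cls s X u \<in> V1" if uCV: "u \<in> CV" for u
  proof (cases "u \<in> S")
    case True then show ?thesis using cls_out unfolding S_def by auto
  next
    case False
    then obtain i where i: "i \<in> J" "u \<in> PVi i" using uCV unfolding CV_def by auto
    then have "cls s X u = X i" using cls_in PVX J1 by blast
    then show ?thesis using i unfolding J_def by auto
  qed
  have repstep: "?R (rep x) (rep y)" if axy: "adj ?U x y" for x y
  proof -
    obtain l where l: "l \<in> E1" "x \<in> \<beta> l" "y \<in> \<beta> l" using axy unfolding adj_def by auto
    obtain p q where pq: "p \<in> ends G l" "x = cls s X p" "q \<in> ends G l" "y = cls s X q"
      using l unfolding \<beta>_def by auto
    have lC: "l \<in> CE" using l unfolding CE_def by auto
    have pC: "p \<in> CV" "q \<in> CV" using endsCV[OF lC] pq by auto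
    have xy: "x \<in> V1" "y \<in> V1" using bV1 l by auto
    have "?R p (rep x)" using rep xy pC pq by auto
    then have "?R (rep x) p" using reach_sym by metis
    moreover have "?R p q" using adjW[OF lC pq(1) pq(3)] .
    moreover have "?R q (rep y)" using rep xy pC pq by auto
    ultimately show ?thesis by (meson rtranclp_trans)
  qed
  have repR: "?R (rep x) (rep y)" if "(adj ?U)\<^sup>*\<^sup>* x y" for x y
    using that
  proof (induction rule: rtranclp_induct)
    case base then show ?case by simp
  next
    case (step y z)
    then show ?case using repstep by (meson rtranclp_trans)
  qed
  have conW: "connected ?W"
  proof -
    obtain l where l: "l \<in> E1"
    proof -
      obtain x where "x \<in> CV'" using CVne by blast
      then have "x \<in> V1" using CVV1 by auto
      then obtain l where "l \<in> E1" unfolding V1_def by auto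
      then show ?thesis by (rule that)
    qed
    obtain p where p: "p \<in> ends G l" using loopless E1G l by fastforce
    have pC: "p \<in> CV" using endsCV l p unfolding CE_def by auto
    show ?thesis
    proof (rule connected_hub[of p])
      show "p \<in> verts ?W" using pC by simp
      show "\<forall>u\<in>verts ?W. ?R u p"
      proof
        fix u assume u: "u \<in> verts ?W"
        then have uC: "u \<in> CV" by simp
        have c1: "cls s X u \<in> V1" "cls s X p \<in> V1" using clsV1 uC pC by auto
        have "?R u (rep (cls s X u))" using rep c1 uC by auto
        moreover have "?R (rep (cls s X u)) (rep (cls s X p))" using repR con1 c1 by blast
        moreover have "?R p (rep (cls s X p))" using rep c1 pC by auto
        then have "?R (rep (cls s X p)) p" using reach_sym by metis
        ultimately show "?R u p" by (meson rtranclp_trans)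
      qed
    qed
  qed
  have cycG: "is_cycle G CV CE"
    unfolding is_cycle_def
  proof (intro conjI)
    show "CV \<noteq> {}" using conW unfolding connected_def by simp
    show "CV \<subseteq> verts G" using CVG .
    show "CE \<subseteq> edges G" using CEG .
    show "\<forall>l\<in>CE. ends G l \<subseteq> CV" using endsCV by blast
    show "\<forall>v\<in>CV. deg ?W v = 2"
    proof
      fix v assume v: "v \<in> CV"
      have "deg ?W v = card {l\<in>CE. v \<in> ends G l}"
        by (rule deg_loopless[of ?W, simplified]) (use CEG loopless in blast)
      then show "deg ?W v = 2" using degC[OF v] by simp
    qed
    show "connected ?W" using conW .
  qed
  have I_J: "I \<subseteq> J"
  proof
    fix i assume iI: "i \<in> I"
    then have i1: "i \<in> {1..s}" using I by auto
    obtain l where l: "l \<in> boundary G (X i)" "l \<in> E1" using bd iI unfolding E1_def by blast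
    then have "card (ends G l \<inter> X i) = 1" unfolding boundary_def by auto
    then obtain p where "p \<in> ends G l" "p \<in> X i" by (metis card_1_singletonE Int_iff singletonI)
    then show "i \<in> J" using toJ[OF i1 l(2)] by blast
  qed
  have finJ: "finite J" using J1 finite_subset by blast
  have finS: "finite S" using SV finV finite_subset by blast
  have finP: "finite (PVi i)" if "i \<in> J" for i using PVX[OF that] X_fin J1 that finite_subset by blast
  have disjSP: "S \<inter> (\<Union>i\<in>J. PVi i) = {}" using S_X PVX J1 by blast
  have sumCV: "sum w CV = sum w S + (\<Sum>i\<in>J. sum w (PVi i))"
  proof -
    have "sum w CV = sum w S + sum w (\<Union>i\<in>J. PVi i)"
      unfolding CV_def by (rule sum.union_disjoint) (use finS finJ finP disjSP in auto)
    moreover have "sum w (\<Union>i\<in>J. PVi i) = (\<Sum>i\<in>J. sum w (PVi i))"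
    proof (rule sum.UNION_disjoint)
      show "finite J" using finJ .
      show "\<forall>i\<in>J. finite (PVi i)" using finP by auto
      show "\<forall>i\<in>J. \<forall>j\<in>J. i \<noteq> j \<longrightarrow> PVi i \<inter> PVi j = {}"
        using PVX Xdisj J1 by blast
    qed
    ultimately show ?thesis by simp
  qed
  have sumV1: "sum (cweight w X s) V1 = sum w S"
  proof -
    let ?T = "(\<lambda>v. {v}) ` S"
    have TV: "?T \<subseteq> V1" unfolding S_def by auto
    have z: "\<forall>x\<in>V1 - ?T. cweight w X s x = 0"
    proof
      fix x assume x: "x \<in> V1 - ?T"
      then obtain l where l: "l \<in> E1" "x \<in> \<beta> l" unfolding V1_def by auto
      consider (a) i where "i \<in> {1..s}" "x = X i" | (b) v where "x = {v}" "v \<in> verts G" "\<forall>i\<in>{1..s}. v \<notin> X i"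
        using V1_char[of l x] l E1G by blast
      then show "cweight w X s x = 0"
      proof cases
        case a then show ?thesis unfolding cweight_def by auto
      next
        case b
        then have "v \<in> S" using x unfolding S_def by auto
        then show ?thesis using x b by auto
      qed
    qed
    have "sum (cweight w X s) V1 = sum (cweight w X s) ?T"
      by (rule sum.mono_neutral_right[OF V1fin TV z])
    also have "\<dots> = sum (cweight w X s \<circ> (\<lambda>v. {v})) S" by (rule sum.reindex) (auto simp: inj_on_def)
    also have "\<dots> = sum w S"
    proof (rule sum.cong)
      fix v assume "v \<in> S"
      have "{v} \<notin> X ` {1..s}" using X_notsingle by (metis imageE)
      then show "(cweight w X s \<circ> (\<lambda>v. {v})) v = w v" unfolding cweight_def by simp
    qed simp
    finally show ?thesis .
  qed
  have sumCV': "sum (cweight w X s) CV' \<le> sum (cweight w X s) V1"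
    by (rule sum_mono2[OF V1fin CVV1]) simp
  have wJ: "real (sum w (PVi i)) \<ge> real (sum w (X i)) powr r_exp" if "i \<in> J" for i
    using D that unfolding PVi_def by auto
  have "(\<Sum>i\<in>I. real (sum w (X i)) powr r_exp) \<le> (\<Sum>i\<in>I. real (sum w (PVi i)))"
    by (rule sum_mono) (use wJ I_J in auto)
  also have "\<dots> \<le> (\<Sum>i\<in>J. real (sum w (PVi i)))"
    by (rule sum_mono2[OF finJ I_J]) (simp add: sum_nonneg)
  finally have A: "(\<Sum>i\<in>I. real (sum w (X i)) powr r_exp) \<le> (\<Sum>i\<in>J. real (sum w (PVi i)))" .
  have B: "real (sum w CV) = real (sum w S) + (\<Sum>i\<in>J. real (sum w (PVi i)))"
    using sumCV by simp
  have "sum (cweight w X s) CV' \<le> sum w S" using sumCV' sumV1 by simp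
  then have Cc: "real (sum (cweight w X s) CV') \<le> real (sum w S)" by (rule of_nat_mono)
  have "real (sum w CV) \<ge> real (sum (cweight w X s) CV') + (\<Sum>i\<in>I. real (sum w (X i)) powr r_exp)"
    using A B Cc by linarith
  moreover have "\<Union>CE' \<subseteq> CE" unfolding CE_def E1_def by auto
  ultimately show ?thesis using cycG by blast
qed

end

theorem lemma2p5:
  fixes G :: "('v, 'e) mgraph" and w :: "'v \<Rightarrow> nat" and n s :: nat
    and X :: "nat \<Rightarrow> 'v set" and es :: "'e list" and e f :: 'e
    and CV' :: "'v set set" and CE' :: "'e set set" and I :: "nat set"
  assumes "n \<ge> 4"
    and "star_property n"
    and "two_connected G" and "cubic G" and "card (verts G) = n"
    and "e \<in> edges G" and "f \<in> edges G"
    and "\<forall>F. two_edge_cut G F \<longrightarrow> separates G F e f"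
    and "\<forall>i\<in>{1..s}. X i \<subseteq> verts G - (ends G e \<union> ends G f)"
    and "\<forall>i\<in>{1..s}. \<forall>j\<in>{1..s}. i \<noteq> j \<longrightarrow> X i \<inter> X j = {}"
    and "\<forall>i\<in>{1..s}. card (X i) \<ge> 2"
    and "\<forall>i\<in>{1..s}. connected (induced G (X i))"
    and "cubic (contract G X s)"
    and "\<forall>l\<in>set es. {l} \<in> edges (contract G X s)"
    and "is_cycle (ominus_seq (contract G X s) es) CV' CE'"
    and "I \<subseteq> {1..s}"
    and "\<forall>i\<in>I. boundary G (X i) \<inter> \<Union>CE' \<noteq> {}"
  shows "\<exists>CV CE. is_cycle G CV CE \<and> \<Union>CE' \<subseteq> CE \<and>
           real (sum w CV) \<ge> real (sum (cweight w X s) CV')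
                              + (\<Sum>i\<in>I. real (sum w (X i)) powr r_exp)"
proof -
  interpret setting G n s X e f
    by (rule setting.intro) (use assms in auto)
  show ?thesis using final[of es CV' CE' I w] assms by blast
qed

end
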